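(* Let $0<q<1$, $\Re\eta>-1$, $\mu\ge0$, $\lambda\ge1$, and let $\phi(z)=1+\sum_{n\ge1}E_nz^n$ be analytic in $\Delta$ with $\Re\phi>0$, $\phi(0)=1$, $E_1>0$. Put $M_k=\mu-(\mu-1)\widetilde{[k]}_q$ and $N=\mu-(\mu-1)\widetilde{[2]}_q^{\,2}$, $$\Omega=2(\lambda\widetilde{[3]}_q-1)M_3L_3+\lambda\big(\lambda M_2^2-N\big)\widetilde{[2]}_q^{\,2}L_2^2,$$ $$\Theta=2(\lambda\widetilde{[3]}_q-1)M_3E_1^2L_3+\lambda\big\{\lambda M_2^2(E_1^2+2E_1-2E_2)-NE_1^2\big\}\widetilde{[2]}_q^{\,2}L_2^2,$$ and assume $M_2,M_3,\Omega,\Theta$ are nonzero. If $f(z)=z+\sum_{n\ge2}a_nz^n$ belongs to $\widetilde{\mathcal{S}^*_{\Sigma}}{}^{\eta}_q(\mu,\lambda;\phi)$, then $$|a_2|\le\min\left\{\frac{E_1}{\lambda|M_2L_2|\widetilde{[2]}_q},\ \sqrt{\frac{2(|E_2-E_1|+E_1)}{|\Omega|}},\ \frac{E_1\sqrt{2E_1}}{\sqrt{|\Theta|}}\right\}$$ and $$|a_3|\le\frac{E_1}{(\lambda\widetilde{[3]}_q-1)|M_3L_3|}+\min\left\{\frac{E_1^2}{\lambda^2M_2^2\widetilde{[2]}_q^{\,2}|L_2|^2},\ \frac{2(|E_2-E_1|+E_1)}{|\Omega|}\right\}.$$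
   Context: $\Delta=\{z\in\mathbb{C}:|z|<1\}$. $\Sigma$ denotes the class of analytic $f(z)=z+\sum_{n\ge2}a_nz^n$ on $\Delta$ that are univalent and whose inverse $g=f^{-1}$ (with $g(w)=w-a_2w^2+(2a_2^2-a_3)w^3-\cdots$) extends univalently to $\Delta$. For $0<q<1$ and $\chi\in\mathbb{C}$, $\widetilde{[\chi]}_q=\frac{q^{\chi}-q^{-\chi}}{q-q^{-1}}$ (for $n\in\mathbb N$, $\widetilde{[n]}_q=\sum_{k=0}^{n-1}q^{n-1-2k}$). The symmetric $q$-derivative: $\widetilde{\mathcal D}_qF(z)=\frac{F(qz)-F(q^{-1}z)}{(q-q^{-1})z}$ ($z\neq0$), $\widetilde{\mathcal D}_qF(0)=F'(0)$. For $\Re\eta>-1$, the generalized Bernardi operator acts on $f=z+\sum_{n\ge2}a_nz^n$ by $\mathcal J^{\eta}_qf(z)=z+\sum_{n\ge2}L_na_nz^n$, where $L_n=\widetilde{[1+\eta]}_q/\widetilde{[n+\eta]}_q$. Subordination $F\prec G$ means $F=G\circ h$ with $h$ analytic on $\Delta$, $h(0)=0$, $|h|<1$. Non-integer powers are principal branches equal to $1$ at the origin. The class $\widetilde{\mathcal{S}^*_{\Sigma}}{}^{\eta}_q(\mu,\lambda;\phi)$ ($\mu\ge0$, $\lambda\ge1$) consists of $f\in\Sigma$, $g=f^{-1}$, such that, writing $F=\mathcal J^\eta_qf$ and $G=\mathcal J^\eta_qg$, $$\left\{\frac{2z[\widetilde{\mathcal D}_qF(z)]^{\lambda}}{F(z)-F(-z)}\right\}^{\mu}\left\{\frac{2\{\widetilde{\mathcal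 D}_q[z\widetilde{\mathcal D}_qF(z)]\}^{\lambda}}{\widetilde{\mathcal D}_q[F(z)-F(-z)]}\right\}^{1-\mu}\prec\phi(z)$$ and the same expression with $F,z$ replaced by $G,w$ is subordinate to $\phi(w)$, for $z,w\in\Delta$. *)

theory Defs
  imports "HOL-Analysis.Analysis"
begin

definition qnum :: "real \<Rightarrow> complex \<Rightarrow> complex" where
  "qnum q c = (complex_of_real q powr c - complex_of_real q powr (-c)) / complex_of_real (q - 1/q)"

definition qnat :: "real \<Rightarrow> nat \<Rightarrow> real" where
  "qnat q n = Re (qnum q (of_nat n))"

definition taylor_coeff :: "(complex \<Rightarrow> complex) \<Rightarrow> nat \<Rightarrow> complex" where
  "taylor_coeff f n = (deriv ^^ n) f 0 / fact n"

definition bern_L :: "real \<Rightarrow> complex \<Rightarrow> nat \<Rightarrow> complex" where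
  "bern_L q \<eta> n = qnum q (1 + \<eta>) / qnum q (of_nat n + \<eta>)"

definition bernardi :: "real \<Rightarrow> complex \<Rightarrow> (complex \<Rightarrow> complex) \<Rightarrow> complex \<Rightarrow> complex" where
  "bernardi q \<eta> f z = z + (\<Sum>n. bern_L q \<eta> (n+2) * taylor_coeff f (n+2) * z ^ (n+2))"

definition symqD :: "real \<Rightarrow> (complex \<Rightarrow> complex) \<Rightarrow> complex \<Rightarrow> complex" where
  "symqD q F z = (if z = 0 then deriv F 0
     else (F (complex_of_real q * z) - F (z / complex_of_real q)) / (complex_of_real (q - 1/q) * z))"

definition odd_quot :: "(complex \<Rightarrow> complex) \<Rightarrow> complex \<Rightarrow> complex" where
  "odd_quot F z = (if z = 0 then 2 * deriv F 0 else (F z - F (-z)) / z)"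

text \<open>Principal power w^a, with w^0 = 1 (the factor is absent when the exponent is 0).\<close>
definition ppow :: "complex \<Rightarrow> real \<Rightarrow> complex" where
  "ppow w a = (if a = 0 then 1 else w powr complex_of_real a)"

text \<open>The defining expression of the class, for F = J f.
  {2z[D_q F]^lam/(F(z)-F(-z))}^mu * {2{D_q[z D_q F]}^lam / D_q[F(z)-F(-z)]}^(1-mu)\<close>
definition class_expr :: "real \<Rightarrow> real \<Rightarrow> real \<Rightarrow> (complex \<Rightarrow> complex) \<Rightarrow> complex \<Rightarrow> complex" where
  "class_expr q \<mu> lam F z =
     ppow (2 * ppow (symqD q F z) lam / odd_quot F z) \<mu> *
     ppow (2 * ppow (symqD q (\<lambda>t. t * symqD q F t) z) lam / symqD q (\<lambda>t. F t - F (-t)) z) (1 - \<mu>)"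

definition subord :: "(complex \<Rightarrow> complex) \<Rightarrow> (complex \<Rightarrow> complex) \<Rightarrow> bool" where
  "subord F G \<longleftrightarrow> (\<exists>h. h holomorphic_on ball 0 1 \<and> h 0 = 0 \<and>
      (\<forall>z\<in>ball 0 1. norm (h z) < 1) \<and> (\<forall>z\<in>ball 0 1. F z = G (h z)))"

definition inv_ext :: "(complex \<Rightarrow> complex) \<Rightarrow> (complex \<Rightarrow> complex) \<Rightarrow> bool" where
  "inv_ext f g \<longleftrightarrow> g holomorphic_on ball 0 1 \<and> inj_on g (ball 0 1) \<and>
      (\<forall>z\<in>ball 0 1. f z \<in> ball 0 1 \<longrightarrow> g (f z) = z)"

definition Sigma_class :: "(complex \<Rightarrow> complex) \<Rightarrow> bool" where
  "Sigma_class f \<longleftrightarrow> f holomorphic_on ball 0 1 \<and> inj_on f (ball 0 1) \<and> f 0 = 0 \<and>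
      deriv f 0 = 1 \<and> (\<exists>g. inv_ext f g)"

definition S_class :: "real \<Rightarrow> complex \<Rightarrow> real \<Rightarrow> real \<Rightarrow> (complex \<Rightarrow> complex) \<Rightarrow> (complex \<Rightarrow> complex) \<Rightarrow> bool" where
  "S_class q \<eta> \<mu> lam \<phi> f \<longleftrightarrow> Sigma_class f \<and>
      subord (class_expr q \<mu> lam (bernardi q \<eta> f)) \<phi> \<and>
      (\<forall>g. inv_ext f g \<longrightarrow> subord (class_expr q \<mu> lam (bernardi q \<eta> g)) \<phi>)"

end

theory Submission
  imports Defs "HOL-Complex_Analysis.Complex_Analysis"
begin

definition ex2 :: "(complex \<Rightarrow> complex) \<Rightarrow> complex \<Rightarrow> complex \<Rightarrow> complex \<Rightarrow> bool" where
  "ex2 f a0 a1 a2 \<longleftrightarrow> (\<exists>R c. (R \<longlongrightarrow> c) (at 0) \<and>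
      (\<forall>\<^sub>F z in at 0. f z = a0 + a1*z + a2*z^2 + z^3 * R z))"

definition ex3 :: "(complex \<Rightarrow> complex) \<Rightarrow> complex \<Rightarrow> complex \<Rightarrow> complex \<Rightarrow> complex \<Rightarrow> bool" where
  "ex3 f a0 a1 a2 a3 \<longleftrightarrow> (\<exists>R c. (R \<longlongrightarrow> c) (at 0) \<and>
      (\<forall>\<^sub>F z in at 0. f z = a0 + a1*z + a2*z^2 + a3*z^3 + z^4 * R z))"

definition tay2 :: "(complex \<Rightarrow> complex) \<Rightarrow> complex \<Rightarrow> complex \<Rightarrow> complex \<Rightarrow> complex \<Rightarrow> bool" where
  "tay2 g w0 b0 b1 b2 \<longleftrightarrow> (\<exists>S. isCont S w0 \<and>
      (\<forall>\<^sub>F w in nhds w0. g w = b0 + b1*(w-w0) + b2*(w-w0)^2 + (w-w0)^3 * S w))"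

definition tay3 :: "(complex \<Rightarrow> complex) \<Rightarrow> complex \<Rightarrow> complex \<Rightarrow> complex \<Rightarrow> complex \<Rightarrow> complex \<Rightarrow> bool" where
  "tay3 g w0 b0 b1 b2 b3 \<longleftrightarrow> (\<exists>S. isCont S w0 \<and>
      (\<forall>\<^sub>F w in nhds w0. g w = b0 + b1*(w-w0) + b2*(w-w0)^2 + b3*(w-w0)^3 + (w-w0)^4 * S w))"

lemma ex2_tendsto:
  assumes "ex2 f a0 a1 a2" shows "(f \<longlongrightarrow> a0) (at 0)"
proof -
  obtain R c where R: "(R \<longlongrightarrow> c) (at 0)" and ev: "\<forall>\<^sub>F z in at 0. f z = a0 + a1*z + a2*z^2 + z^3 * R z"
    using assms unfolding ex2_def by blast
  have "((\<lambda>z. a0 + a1*z + a2*z^2 + z^3 * R z) \<longlongrightarrow> a0 + a1*0 + a2*0^2 + 0^3 * c) (at 0)"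
    by (intro tendsto_intros R)
  then have "((\<lambda>z. a0 + a1*z + a2*z^2 + z^3 * R z) \<longlongrightarrow> a0) (at 0)" by simp
  moreover have "\<forall>\<^sub>F z in at 0. a0 + a1*z + a2*z^2 + z^3 * R z = f z"
    using ev by (simp add: eventually_mono)
  ultimately show ?thesis by (rule Lim_transform_eventually)
qed

lemma ex2_cong:
  assumes "ex2 f a0 a1 a2" "\<forall>\<^sub>F z in at 0. f z = g z" shows "ex2 g a0 a1 a2"
proof -
  obtain R c where R: "(R \<longlongrightarrow> c) (at 0)" and ev: "\<forall>\<^sub>F z in at 0. f z = a0 + a1*z + a2*z^2 + z^3 * R z"
    using assms unfolding ex2_def by blast
  have "\<forall>\<^sub>F z in at 0. g z = a0 + a1*z + a2*z^2 + z^3 * R z"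
    using ev assms(2) by eventually_elim simp
  then show ?thesis using R unfolding ex2_def by blast
qed

lemma ex3_cong:
  assumes "ex3 f a0 a1 a2 a3" "\<forall>\<^sub>F z in at 0. f z = g z" shows "ex3 g a0 a1 a2 a3"
proof -
  obtain R c where R: "(R \<longlongrightarrow> c) (at 0)" and ev: "\<forall>\<^sub>F z in at 0. f z = a0 + a1*z + a2*z^2 + a3*z^3 + z^4 * R z"
    using assms unfolding ex3_def by blast
  have "\<forall>\<^sub>F z in at 0. g z = a0 + a1*z + a2*z^2 + a3*z^3 + z^4 * R z"
    using ev assms(2) by eventually_elim simp
  then show ?thesis using R unfolding ex3_def by blast
qed

lemma ex3_ex2:
  assumes "ex3 f a0 a1 a2 a3" shows "ex2 f a0 a1 a2"
proof -
  obtain R c where R: "(R \<longlongrightarrow> c) (at 0)" and ev: "\<forall>\<^sub>F z in at 0. f z = a0 + a1*z + a2*z^2 + a3*z^3 + z^4 * R z"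
    using assms unfolding ex3_def by blast
  have "((\<lambda>z. a3 + z * R z) \<longlongrightarrow> a3 + 0 * c) (at 0)" by (intro tendsto_intros R)
  moreover have "\<forall>\<^sub>F z in at 0. f z = a0 + a1*z + a2*z^2 + z^3 * (a3 + z * R z)"
    using ev by eventually_elim (simp add: algebra_simps power_numeral_reduce)
  ultimately show ?thesis unfolding ex2_def by blast
qed

lemma tay2_ex2:
  assumes "tay2 g 0 b0 b1 b2" shows "ex2 g b0 b1 b2"
proof -
  obtain S where S: "isCont S 0" and ev: "\<forall>\<^sub>F w in nhds 0. g w = b0 + b1*(w-0) + b2*(w-0)^2 + (w-0)^3 * S w"
    using assms unfolding tay2_def by blast
  have "(S \<longlongrightarrow> S 0) (at 0)" using S isCont_def by blast
  moreover have "\<forall>\<^sub>F z in at 0. g z = b0 + b1*z + b2*z^2 + z^3 * S z"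
    unfolding eventually_at_filter using ev by (auto elim!: eventually_mono)
  ultimately show ?thesis unfolding ex2_def by blast
qed

lemma tay3_ex3:
  assumes "tay3 g 0 b0 b1 b2 b3" shows "ex3 g b0 b1 b2 b3"
proof -
  obtain S where S: "isCont S 0" and ev: "\<forall>\<^sub>F w in nhds 0. g w = b0 + b1*(w-0) + b2*(w-0)^2 + b3*(w-0)^3 + (w-0)^4 * S w"
    using assms unfolding tay3_def by blast
  have "(S \<longlongrightarrow> S 0) (at 0)" using S isCont_def by blast
  moreover have "\<forall>\<^sub>F z in at 0. g z = b0 + b1*z + b2*z^2 + b3*z^3 + z^4 * S z"
    unfolding eventually_at_filter using ev by (auto elim!: eventually_mono)
  ultimately show ?thesis unfolding ex3_def by blast
qed

lemma tay3_tay2: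
  assumes "tay3 g w0 b0 b1 b2 b3" shows "tay2 g w0 b0 b1 b2"
proof -
  obtain S where S: "isCont S w0" and ev: "\<forall>\<^sub>F w in nhds w0. g w = b0 + b1*(w-w0) + b2*(w-w0)^2 + b3*(w-w0)^3 + (w-w0)^4 * S w"
    using assms unfolding tay3_def by blast
  have "isCont (\<lambda>w. b3 + (w-w0) * S w) w0" by (intro continuous_intros S)
  moreover have "\<forall>\<^sub>F w in nhds w0. g w = b0 + b1*(w-w0) + b2*(w-w0)^2 + (w-w0)^3 * (b3 + (w-w0) * S w)"
    using ev by eventually_elim (simp add: algebra_simps power_numeral_reduce)
  ultimately show ?thesis unfolding tay2_def by blast
qed

lemma lim0_unique:
  fixes G :: "complex \<Rightarrow> complex"
  assumes "\<forall>\<^sub>F z in at 0. c + z * G z = 0" "(G \<longlongrightarrow> l) (at 0)" shows "c = 0"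
proof -
  have "((\<lambda>z. c + z * G z) \<longlongrightarrow> c + 0 * l) (at 0)" by (intro tendsto_intros assms)
  then have 1: "((\<lambda>z. c + z * G z) \<longlongrightarrow> c) (at 0)" by simp
  have "((\<lambda>z. c + z * G z) \<longlongrightarrow> 0) (at 0)"
    by (rule Lim_transform_eventually[of "\<lambda>_. 0"]) (use assms(1) in \<open>auto elim: eventually_mono\<close>)
  with 1 show ?thesis using tendsto_unique[OF at_neq_bot] by blast
qed

lemma ev_nz: "\<forall>\<^sub>F z in at (0::complex). z \<noteq> 0"
  by (simp add: eventually_at_filter)

lemma ex2_unique:
  assumes "ex2 f a0 a1 a2" "ex2 f b0 b1 b2" shows "a0 = b0 \<and> a1 = b1 \<and> a2 = b2"
proof -
  obtain R c where R: "(R \<longlongrightarrow> c) (at 0)" and ev: "\<forall>\<^sub>F z in at 0. f z = a0 + a1*z + a2*z^2 + z^3 * R z"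
    using assms(1) unfolding ex2_def by blast
  obtain S d where S: "(S \<longlongrightarrow> d) (at 0)" and ev': "\<forall>\<^sub>F z in at 0. f z = b0 + b1*z + b2*z^2 + z^3 * S z"
    using assms(2) unfolding ex2_def by blast
  have E: "\<forall>\<^sub>F z in at 0. (a0 - b0) + z * ((a1 - b1) + z * ((a2 - b2) + z * (R z - S z))) = 0"
    using ev ev' by eventually_elim (simp add: algebra_simps power_numeral_reduce)
  have "a0 - b0 = 0"
    by (rule lim0_unique[OF E, of "a1 - b1 + 0 * (a2 - b2 + 0 * (c - d))"]) (intro tendsto_intros R S)
  note h = this
  have E2: "\<forall>\<^sub>F z in at 0. (a1 - b1) + z * ((a2 - b2) + z * (R z - S z)) = 0"
    using E ev_nz by eventually_elim (use h in simp)
  have "a1 - b1 = 0"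
    by (rule lim0_unique[OF E2, of "a2 - b2 + 0 * (c - d)"]) (intro tendsto_intros R S)
  note h = this
  have E3: "\<forall>\<^sub>F z in at 0. (a2 - b2) + z * (R z - S z) = 0"
    using E2 ev_nz by eventually_elim (use h in simp)
  have "a2 - b2 = 0"
    by (rule lim0_unique[OF E3, of "c - d"]) (intro tendsto_intros R S)
  with \<open>a0 - b0 = 0\<close> \<open>a1 - b1 = 0\<close> show ?thesis by simp
qed

lemma ex3_unique:
  assumes "ex3 f a0 a1 a2 a3" "ex3 f b0 b1 b2 b3" shows "a0 = b0 \<and> a1 = b1 \<and> a2 = b2 \<and> a3 = b3"
proof -
  obtain R c where R: "(R \<longlongrightarrow> c) (at 0)" and ev: "\<forall>\<^sub>F z in at 0. f z = a0 + a1*z + a2*z^2 + a3*z^3 + z^4 * R z"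
    using assms(1) unfolding ex3_def by blast
  obtain S d where S: "(S \<longlongrightarrow> d) (at 0)" and ev': "\<forall>\<^sub>F z in at 0. f z = b0 + b1*z + b2*z^2 + b3*z^3 + z^4 * S z"
    using assms(2) unfolding ex3_def by blast
  have E: "\<forall>\<^sub>F z in at 0. (a0 - b0) + z * ((a1 - b1) + z * ((a2 - b2) + z * ((a3 - b3) + z * (R z - S z)))) = 0"
    using ev ev' by eventually_elim (simp add: algebra_simps power_numeral_reduce)
  have "a0 - b0 = 0"
    by (rule lim0_unique[OF E, of "a1 - b1 + 0 * (a2 - b2 + 0 * (a3 - b3 + 0 * (c - d)))"]) (intro tendsto_intros R S)
  note h = this
  have E2: "\<forall>\<^sub>F z in at 0. (a1 - b1) + z * ((a2 - b2) + z * ((a3 - b3) + z * (R z - S z))) = 0"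
    using E ev_nz by eventually_elim (use h in simp)
  have "a1 - b1 = 0"
    by (rule lim0_unique[OF E2, of "a2 - b2 + 0 * (a3 - b3 + 0 * (c - d))"]) (intro tendsto_intros R S)
  note h = this
  have E3: "\<forall>\<^sub>F z in at 0. (a2 - b2) + z * ((a3 - b3) + z * (R z - S z)) = 0"
    using E2 ev_nz by eventually_elim (use h in simp)
  have "a2 - b2 = 0"
    by (rule lim0_unique[OF E3, of "a3 - b3 + 0 * (c - d)"]) (intro tendsto_intros R S)
  note h = this
  have E4: "\<forall>\<^sub>F z in at 0. (a3 - b3) + z * (R z - S z) = 0"
    using E3 ev_nz by eventually_elim (use h in simp)
  have "a3 - b3 = 0"
    by (rule lim0_unique[OF E4, of "c - d"]) (intro tendsto_intros R S)
  with \<open>a0 - b0 = 0\<close> \<open>a1 - b1 = 0\<close> \<open>a2 - b2 = 0\<close> show ?thesis by simp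
qed

lemma ex2_comp:
  assumes "ex2 f a0 a1 a2" "tay2 g a0 b0 b1 b2"
  shows "ex2 (\<lambda>z. g (f z)) b0 (b1*a1) (b1*a2 + b2*a1^2)"
proof -
  obtain R c where R: "(R \<longlongrightarrow> c) (at 0)" and ev: "\<forall>\<^sub>F z in at 0. f z = a0 + a1*z + a2*z^2 + z^3 * R z"
    using assms(1) unfolding ex2_def by blast
  obtain S where S: "isCont S a0" and evg: "\<forall>\<^sub>F w in nhds a0. g w = b0 + b1*(w-a0) + b2*(w-a0)^2 + (w-a0)^3 * S w"
    using assms(2) unfolding tay2_def by blast
  have fl: "(f \<longlongrightarrow> a0) (at 0)" by (rule ex2_tendsto[OF assms(1)])
  have evg': "\<forall>\<^sub>F z in at 0. g (f z) = b0 + b1*(f z-a0) + b2*(f z-a0)^2 + (f z-a0)^3 * S (f z)"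
    using eventually_compose_filterlim[OF evg fl] .
  define R' where "R' z = b1 * R z + b2 * (2*a1*(a2 + z*R z) + z*(a2 + z*R z)^2) + (a1 + a2*z + z^2*R z)^3 * S (f z)" for z
  have "(R' \<longlongrightarrow> b1 * c + b2 * (2*a1*(a2 + 0*c) + 0*(a2 + 0*c)^2) + (a1 + a2*0 + 0^2*c)^3 * S a0) (at 0)"
    unfolding R'_def by (intro tendsto_intros R isCont_tendsto_compose[OF S fl])
  moreover have "\<forall>\<^sub>F z in at 0. g (f z) = b0 + (b1*a1)*z + (b1*a2 + b2*a1^2)*z^2 + z^3 * R' z"
    using ev evg'
  proof eventually_elim
    case (elim z)
    have d: "f z - a0 = z * (a1 + a2*z + z^2*R z)" using elim(1) by (simp add: algebra_simps power_numeral_reduce)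
    show ?case unfolding elim(2) d R'_def by (simp add: algebra_simps power_numeral_reduce)
  qed
  ultimately show ?thesis unfolding ex2_def by blast
qed

lemma ex3_comp0:
  assumes "ex3 f 0 a1 a2 a3" "tay3 g 0 b0 b1 b2 b3"
  shows "ex3 (\<lambda>z. g (f z)) b0 (b1*a1) (b1*a2 + b2*a1^2) (b1*a3 + 2*b2*a1*a2 + b3*a1^3)"
proof -
  obtain R c where R: "(R \<longlongrightarrow> c) (at 0)" and ev: "\<forall>\<^sub>F z in at 0. f z = 0 + a1*z + a2*z^2 + a3*z^3 + z^4 * R z"
    using assms(1) unfolding ex3_def by blast
  obtain S where S: "isCont S 0" and evg: "\<forall>\<^sub>F w in nhds 0. g w = b0 + b1*(w-0) + b2*(w-0)^2 + b3*(w-0)^3 + (w-0)^4 * S w"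
    using assms(2) unfolding tay3_def by blast
  have fl: "(f \<longlongrightarrow> 0) (at 0)" by (rule ex2_tendsto[OF ex3_ex2[OF assms(1)]])
  have evg': "\<forall>\<^sub>F z in at 0. g (f z) = b0 + b1*(f z-0) + b2*(f z-0)^2 + b3*(f z-0)^3 + (f z-0)^4 * S (f z)"
    using eventually_compose_filterlim[OF evg fl] .
  define V where "V z = a2 + a3*z + z^2*R z" for z
  define T where "T z = a1 + z * V z" for z
  define R' where "R' z = b1 * R z + b2 * (2*a1*(a3 + z*R z) + (V z)^2) + b3 * V z * ((T z)^2 + a1 * T z + a1^2) + (T z)^4 * S (f z)" for z
  have "(R' \<longlongrightarrow> b1 * c + b2 * (2*a1*(a3 + 0*c) + (a2 + a3*0 + 0^2*c)^2) + b3 * (a2 + a3*0 + 0^2*c) * ((a1 + 0*(a2 + a3*0 + 0^2*c))^2 + a1 * (a1 + 0*(a2 + a3*0 + 0^2*c)) + a1^2) + (a1 + 0*(a2 + a3*0 + 0^2*c))^4 * S 0) (at 0)"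
    unfolding R'_def T_def V_def by (intro tendsto_intros R isCont_tendsto_compose[OF S fl])
  moreover have "\<forall>\<^sub>F z in at 0. g (f z) = b0 + (b1*a1)*z + (b1*a2 + b2*a1^2)*z^2 + (b1*a3 + 2*b2*a1*a2 + b3*a1^3)*z^3 + z^4 * R' z"
    using ev evg'
  proof eventually_elim
    case (elim z)
    have d: "f z = z * T z" using elim(1) by (simp add: T_def V_def algebra_simps power_numeral_reduce)
    show ?case unfolding elim(2) unfolding R'_def unfolding d T_def V_def by algebra
  qed
  ultimately show ?thesis unfolding ex3_def by blast
qed

lemma ex2_mult:
  assumes "ex2 f a0 a1 a2" "ex2 g b0 b1 b2"
  shows "ex2 (\<lambda>z. f z * g z) (a0*b0) (a0*b1 + a1*b0) (a0*b2 + a1*b1 + a2*b0)"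
proof -
  obtain R c where R: "(R \<longlongrightarrow> c) (at 0)" and ev: "\<forall>\<^sub>F z in at 0. f z = a0 + a1*z + a2*z^2 + z^3 * R z"
    using assms(1) unfolding ex2_def by blast
  obtain S d where S: "(S \<longlongrightarrow> d) (at 0)" and ev': "\<forall>\<^sub>F z in at 0. g z = b0 + b1*z + b2*z^2 + z^3 * S z"
    using assms(2) unfolding ex2_def by blast
  define R' where "R' z = a1*b2 + a2*b1 + a2*b2*z + R z * (b0 + b1*z + b2*z^2) + S z * (a0 + a1*z + a2*z^2) + z^3 * R z * S z" for z
  have "(R' \<longlongrightarrow> a1*b2 + a2*b1 + a2*b2*0 + c * (b0 + b1*0 + b2*0^2) + d * (a0 + a1*0 + a2*0^2) + 0^3 * c * d) (at 0)"
    unfolding R'_def by (intro tendsto_intros R S)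
  moreover have "\<forall>\<^sub>F z in at 0. f z * g z = a0*b0 + (a0*b1 + a1*b0)*z + (a0*b2 + a1*b1 + a2*b0)*z^2 + z^3 * R' z"
    using ev ev' by eventually_elim (simp add: R'_def algebra_simps power_numeral_reduce)
  ultimately show ?thesis unfolding ex2_def by blast
qed

lemma ex2_const: "ex2 (\<lambda>z. c) c 0 0"
  unfolding ex2_def by (rule exI[of _ "\<lambda>_. 0"], rule exI[of _ 0]) simp

lemma ex3_id: "ex3 (\<lambda>z. z) 0 1 0 0"
  unfolding ex3_def by (rule exI[of _ "\<lambda>_. 0"], rule exI[of _ 0]) simp

lemma ex2_mult_z:
  assumes "ex2 f a0 a1 a2" shows "ex3 (\<lambda>z. z * f z) 0 a0 a1 a2"
proof -
  obtain R c where R: "(R \<longlongrightarrow> c) (at 0)" and ev: "\<forall>\<^sub>F z in at 0. f z = a0 + a1*z + a2*z^2 + z^3 * R z"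
    using assms(1) unfolding ex2_def by blast
  have "\<forall>\<^sub>F z in at 0. z * f z = 0 + a0*z + a1*z^2 + a2*z^3 + z^4 * R z"
    using ev by eventually_elim (simp add: algebra_simps power_numeral_reduce)
  then show ?thesis using R unfolding ex3_def by blast
qed

lemma ex3_div_z:
  assumes "ex3 f 0 a1 a2 a3" shows "ex2 (\<lambda>z. f z / z) a1 a2 a3"
proof -
  obtain R c where R: "(R \<longlongrightarrow> c) (at 0)" and ev: "\<forall>\<^sub>F z in at 0. f z = 0 + a1*z + a2*z^2 + a3*z^3 + z^4 * R z"
    using assms(1) unfolding ex3_def by blast
  have "\<forall>\<^sub>F z in at 0. f z / z = a1 + a2*z + a3*z^2 + z^3 * R z"
    using ev ev_nz by eventually_elim (simp add: field_simps power_numeral_reduce)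
  then show ?thesis using R unfolding ex2_def by blast
qed

lemma filterlim_scale0:
  fixes c :: complex assumes "c \<noteq> 0" shows "filterlim (\<lambda>z. c * z) (at 0) (at 0)"
  unfolding filterlim_at using assms
  by (auto simp: eventually_at_filter intro!: tendsto_eq_intros)

lemma ex3_reflect:
  assumes "ex3 f a0 a1 a2 a3" shows "ex3 (\<lambda>z. f (-z)) a0 (-a1) a2 (-a3)"
proof -
  obtain R c where R: "(R \<longlongrightarrow> c) (at 0)" and ev: "\<forall>\<^sub>F z in at 0. f z = a0 + a1*z + a2*z^2 + a3*z^3 + z^4 * R z"
    using assms(1) unfolding ex3_def by blast
  have fl: "filterlim (\<lambda>z::complex. -z) (at 0) (at 0)"
    using filterlim_scale0[of "-1"] by simp
  have "\<forall>\<^sub>F z in at 0. f (-z) = a0 + (-a1)*z + a2*z^2 + (-a3)*z^3 + z^4 * R (-z)"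
    using eventually_compose_filterlim[OF ev fl] by eventually_elim (simp add: algebra_simps power_numeral_reduce)
  moreover have "((\<lambda>z. R (-z)) \<longlongrightarrow> c) (at 0)" using filterlim_compose[OF R fl] by simp
  ultimately show ?thesis unfolding ex3_def by blast
qed

lemma ex3_diff:
  assumes "ex3 f a0 a1 a2 a3" "ex3 g b0 b1 b2 b3" shows "ex3 (\<lambda>z. f z - g z) (a0-b0) (a1-b1) (a2-b2) (a3-b3)"
proof -
  obtain R c where R: "(R \<longlongrightarrow> c) (at 0)" and ev: "\<forall>\<^sub>F z in at 0. f z = a0 + a1*z + a2*z^2 + a3*z^3 + z^4 * R z"
    using assms(1) unfolding ex3_def by blast
  obtain S d where S: "(S \<longlongrightarrow> d) (at 0)" and ev': "\<forall>\<^sub>F z in at 0. g z = b0 + b1*z + b2*z^2 + b3*z^3 + z^4 * S z"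
    using assms(2) unfolding ex3_def by blast
  have "\<forall>\<^sub>F z in at 0. f z - g z = (a0-b0) + (a1-b1)*z + (a2-b2)*z^2 + (a3-b3)*z^3 + z^4 * (R z - S z)"
    using ev ev' by eventually_elim (simp add: algebra_simps)
  moreover have "((\<lambda>z. R z - S z) \<longlongrightarrow> c - d) (at 0)" by (intro tendsto_intros R S)
  ultimately show ?thesis unfolding ex3_def by blast
qed

lemma holo_tay3:
  assumes hol: "g holomorphic_on ball w0 r" and r: "r > 0"
  shows "tay3 g w0 ((deriv ^^ 0) g w0 / fact 0) ((deriv ^^ 1) g w0 / fact 1)
                 ((deriv ^^ 2) g w0 / fact 2) ((deriv ^^ 3) g w0 / fact 3)"
proof -
  define c where "c n = (deriv ^^ n) g w0 / fact n" for n
  have sm: "(\<lambda>n. c n * (w-w0)^n) sums g w" if "w \<in> ball w0 r" for w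
    using holomorphic_power_series[OF hol that] unfolding c_def .
  define K where "K = complex_of_real (r/2)"
  have K: "w0 + K \<in> ball w0 r" using r by (simp add: K_def dist_norm)
  have "summable (\<lambda>n. c n * K^n)" using sm[OF K] by (simp add: sums_iff)
  then have "summable (\<lambda>n. c (n+4) * K^(n+4))" by (rule summable_ignore_initial_segment)
  then have "summable (\<lambda>n. c (n+4) * K^(n+4) / K^4)" by (rule summable_divide)
  moreover have "K \<noteq> 0" using r by (simp add: K_def)
  ultimately have sK: "summable (\<lambda>n. c (n+4) * K^n)" by (simp add: power_add)
  define P where "P x = (\<Sum>n. c (n+4) * x^n)" for x
  have cP: "isCont P 0" unfolding P_def
    by (rule isCont_powser[OF sK]) (use \<open>K \<noteq> 0\<close> in simp)
  have cS: "isCont (\<lambda>w. P (w - w0)) w0"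
  proof -
    have "isCont (\<lambda>w. w - w0) w0" by (intro continuous_intros)
    moreover have "isCont P ((\<lambda>w. w - w0) w0)" using cP by simp
    ultimately show ?thesis by (rule isCont_o2)
  qed
  have id: "g w = c 0 + c 1 * (w-w0) + c 2 * (w-w0)^2 + c 3 * (w-w0)^3 + (w-w0)^4 * P (w - w0)"
    if w: "w \<in> ball w0 r" for w
  proof (cases "w = w0")
    case True then show ?thesis by (simp add: c_def)
  next
    case False
    define x where "x = w - w0"
    have x: "x \<noteq> 0" using False by (simp add: x_def)
    have "(\<lambda>n. c (n+4) * x^(n+4)) sums (g w - (\<Sum>i<4. c i * x^i))"
      using sums_split_initial_segment[OF sm[OF w], of 4] by (simp add: x_def)
    then have "(\<lambda>n. c (n+4) * x^(n+4) / x^4) sums ((g w - (\<Sum>i<4. c i * x^i)) / x^4)"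
      by (rule sums_divide)
    then have "(\<lambda>n. c (n+4) * x^n) sums ((g w - (\<Sum>i<4. c i * x^i)) / x^4)"
      using x by (simp add: power_add)
    then have "P x = (g w - (\<Sum>i<4. c i * x^i)) / x^4" unfolding P_def by (rule sums_unique[symmetric])
    then have "g w = (\<Sum>i<4. c i * x^i) + x^4 * P x" using x by (simp add: field_simps)
    then show ?thesis by (simp add: x_def numeral_eq_Suc lessThan_Suc algebra_simps)
  qed
  have "\<forall>\<^sub>F w in nhds w0. g w = c 0 + c 1 * (w-w0) + c 2 * (w-w0)^2 + c 3 * (w-w0)^3 + (w-w0)^4 * P (w - w0)"
    unfolding eventually_nhds using r id by (intro exI[of _ "ball w0 r"]) auto
  then show ?thesis using cS unfolding tay3_def c_def by blast
qed

lemma holo_tay2: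
  assumes hol: "g holomorphic_on ball w0 r" and r: "r > 0"
  shows "tay2 g w0 (g w0) (deriv g w0) (deriv (deriv g) w0 / 2)"
  using tay3_tay2[OF holo_tay3[OF assms]] by (simp add: numeral_eq_Suc)

lemma inv_id:
  fixes a w :: complex assumes "a \<noteq> 0" "w \<noteq> 0"
  shows "1 / w = 1/a + (-1/a^2)*(w-a) + (1/a^3)*(w-a)^2 + (w-a)^3 * (- 1 / (a^3 * w))"
  using assms by (simp add: field_simps) (simp add: algebra_simps power_numeral_reduce)

lemma tay2_inverse:
  assumes "a \<noteq> (0::complex)" shows "tay2 (\<lambda>w. 1 / w) a (1/a) (-1/a^2) (1/a^3)"
proof -
  have "isCont (\<lambda>w. - 1 / (a^3 * w)) a" using assms by (intro continuous_intros) auto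
  moreover have "\<forall>\<^sub>F w in nhds a. 1 / w = 1/a + (-1/a^2)*(w-a) + (1/a^3)*(w-a)^2 + (w-a)^3 * (- 1 / (a^3 * w))"
  proof -
    have "\<forall>\<^sub>F w in nhds a. w \<noteq> 0" using assms by (intro t1_space_nhds) auto
    then show ?thesis
      by eventually_elim (rule inv_id[OF assms])
  qed
  ultimately show ?thesis unfolding tay2_def by blast
qed

lemma ball11_not_nonpos: "w \<in> ball (1::complex) 1 \<Longrightarrow> w \<notin> \<real>\<^sub>\<le>\<^sub>0"
proof -
  assume "w \<in> ball 1 1"
  then have "cmod (1 - w) < 1" by (simp add: dist_norm)
  moreover have "\<bar>Re (1 - w)\<bar> \<le> cmod (1 - w)" by (rule abs_Re_le_cmod)
  ultimately have "Re w > 0" by simp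
  then show ?thesis by (simp add: complex_nonpos_Reals_iff)
qed

lemma tay2_powr:
  fixes s :: complex
  shows "tay2 (\<lambda>w. w powr s) 1 1 s (s*(s-1)/2)"
proof -
  define g where "g = (\<lambda>w::complex. w powr s)"
  have d: "(g has_field_derivative s * w powr (s - 1)) (at w)" if "w \<in> ball 1 1" for w
    unfolding g_def by (rule has_field_derivative_powr[OF ball11_not_nonpos[OF that]])
  have d2: "((\<lambda>w. s * w powr (s - 1)) has_field_derivative s * ((s - 1) * w powr (s - 1 - 1))) (at w)" if "w \<in> ball 1 1" for w
    by (intro DERIV_cmult has_field_derivative_powr[OF ball11_not_nonpos[OF that]])
  have hol: "g holomorphic_on ball 1 1"
    unfolding holomorphic_on_def field_differentiable_def
    using d by (blast intro: has_field_derivative_at_within)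
  have dg: "deriv g w = s * w powr (s - 1)" if "w \<in> ball 1 1" for w
    using d[OF that] by (rule DERIV_imp_deriv)
  have "\<forall>\<^sub>F w in nhds 1. deriv g w = s * w powr (s - 1)"
    unfolding eventually_nhds by (intro exI[of _ "ball 1 1"]) (auto simp: dg)
  then have "deriv (deriv g) 1 = deriv (\<lambda>w. s * w powr (s - 1)) 1"
    by (rule deriv_cong_ev) simp
  also have "\<dots> = s * ((s - 1) * 1 powr (s - 1 - 1))"
    by (rule DERIV_imp_deriv[OF d2]) simp
  finally have dd: "deriv (deriv g) 1 = s * (s - 1)" by simp
  have "deriv g 1 = s" using dg[of 1] by simp
  then show ?thesis using holo_tay2[OF hol] dd by (simp add: g_def)
qed

lemma tay2_ppow:
  fixes a :: real
  shows "tay2 (\<lambda>w. ppow w a) 1 1 (of_real a) (of_real a * (of_real a - 1) / 2)"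
proof (cases "a = 0")
  case True
  then show ?thesis unfolding tay2_def ppow_def
    by (intro exI[of _ "\<lambda>_. 0"]) simp
next
  case False
  then have "(\<lambda>w. ppow w a) = (\<lambda>w. w powr of_real a)" by (simp add: ppow_def fun_eq_iff)
  then show ?thesis using tay2_powr[of "of_real a"] by simp
qed

lemma qnat_eq: assumes "0 < q" shows "qnat q n = (q^n - 1/q^n) / (q - 1/q)"
proof -
  have "qnum q (of_nat n) = complex_of_real ((q powr real n - q powr (- real n)) / (q - 1/q))"
    unfolding qnum_def using assms
    by (simp add: powr_of_real[symmetric])
  moreover have "q powr real n - q powr (- real n) = q^n - 1/q^n"
    using assms by (simp add: powr_minus powr_realpow divide_inverse)
  ultimately show ?thesis unfolding qnat_def by simp
qed

lemma qq_ne1: assumes "0 < q" "q \<noteq> (1::real)" shows "q * q \<noteq> 1"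
proof (cases "q < 1")
  case True
  then have "q * q < q * 1" using assms by (intro mult_strict_left_mono) auto
  then show ?thesis using True by auto
next
  case False
  then have "q > 1" using assms by auto
  then have "q * 1 < q * q" using assms by (intro mult_strict_left_mono) auto
  then show ?thesis using \<open>q > 1\<close> by linarith
qed

lemma qnat_2: assumes "0 < q" "q \<noteq> 1" shows "qnat q 2 = q + 1/q"
proof -
  have ne: "q - 1/q \<noteq> 0" using assms qq_ne1[OF assms] by (auto simp: field_simps)
  have "q^2 - 1/q^2 = (q - 1/q)*(q+1/q)" using assms by (simp add: field_simps power2_eq_square)
  then show ?thesis unfolding qnat_eq[OF assms(1)] using ne by simp
qed

lemma qnat_3: assumes "0 < q" "q \<noteq> 1" shows "qnat q 3 = q^2 + 1 + 1/q^2"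
proof -
  have ne: "q - 1/q \<noteq> 0" using assms qq_ne1[OF assms] by (auto simp: field_simps)
  have "q^3 - 1/q^3 = (q - 1/q)*(q^2 + 1 + 1/q^2)" using assms by (simp add: field_simps power2_eq_square power3_eq_cube)
  then show ?thesis unfolding qnat_eq[OF assms(1)] using ne by simp
qed

lemma symq_alg:
  fixes Q z h1 h2 h3 A B :: complex
  assumes "Q \<noteq> 0" "Q * Q \<noteq> 1" "z \<noteq> 0"
  shows "((0 + h1*(Q*z) + h2*(Q*z)^2 + h3*(Q*z)^3 + (Q*z)^4 * A) - (0 + h1*(z/Q) + h2*(z/Q)^2 + h3*(z/Q)^3 + (z/Q)^4 * B)) / ((Q - 1/Q) * z)
    = h1 + ((Q + 1/Q)*h2)*z + ((Q^2 + 1 + 1/Q^2)*h3)*z^2 + z^3 * ((Q^4*A - B/Q^4)/(Q - 1/Q))"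
proof -
  have ne: "Q - 1/Q \<noteq> 0" using assms by (auto simp: field_simps)
  show ?thesis using assms ne
    by (simp add: field_simps) (simp add: algebra_simps power_numeral_reduce)
qed

lemma ex3_symqD:
  assumes q: "0 < q" "q \<noteq> 1" and H: "ex3 H 0 h1 h2 h3"
  shows "ex2 (symqD q H) h1 (of_real (q + 1/q) * h2) (of_real (q^2 + 1 + 1/q^2) * h3)"
proof -
  define Q where "Q = complex_of_real q"
  have Q0: "Q \<noteq> 0" using q by (simp add: Q_def)
  have QQ: "Q * Q \<noteq> 1"
  proof
    assume "Q * Q = 1"
    then have "complex_of_real (q * q) = of_real 1" by (simp add: Q_def)
    then have "q * q = 1" by (simp only: of_real_eq_iff)
    with qq_ne1[OF q] show False by simp
  qed
  obtain R c where R: "(R \<longlongrightarrow> c) (at 0)" and ev: "\<forall>\<^sub>F z in at 0. H z = 0 + h1*z + h2*z^2 + h3*z^3 + z^4 * R z"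
    using H unfolding ex3_def by blast
  have f1: "filterlim (\<lambda>z. Q * z) (at 0) (at 0)" by (rule filterlim_scale0[OF Q0])
  have f2: "filterlim (\<lambda>z. (1/Q) * z) (at 0) (at 0)" by (rule filterlim_scale0) (use Q0 in simp)
  have ev1: "\<forall>\<^sub>F z in at 0. H (Q*z) = 0 + h1*(Q*z) + h2*(Q*z)^2 + h3*(Q*z)^3 + (Q*z)^4 * R (Q*z)"
    using eventually_compose_filterlim[OF ev f1] .
  have ev2: "\<forall>\<^sub>F z in at 0. H (z/Q) = 0 + h1*(z/Q) + h2*(z/Q)^2 + h3*(z/Q)^3 + (z/Q)^4 * R (z/Q)"
    using eventually_compose_filterlim[OF ev f2] by simp
  define R' where "R' z = (Q^4 * R (Q*z) - R (z/Q) / Q^4) / (Q - 1/Q)" for z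
  have l1: "((\<lambda>z. R (Q*z)) \<longlongrightarrow> c) (at 0)" using filterlim_compose[OF R f1] .
  have l2: "((\<lambda>z. R (z/Q)) \<longlongrightarrow> c) (at 0)" using filterlim_compose[OF R f2] by simp
  have "(R' \<longlongrightarrow> (Q^4 * c - c / Q^4) / (Q - 1/Q)) (at 0)"
    unfolding R'_def by (intro tendsto_intros l1 l2) (use Q0 QQ in \<open>auto simp: field_simps\<close>)
  moreover have "\<forall>\<^sub>F z in at 0. symqD q H z = h1 + (of_real (q + 1/q) * h2)*z + (of_real (q^2 + 1 + 1/q^2) * h3)*z^2 + z^3 * R' z"
    using ev1 ev2 ev_nz
  proof eventually_elim
    case (elim z)
    have "symqD q H z = (H (Q*z) - H (z/Q)) / ((Q - 1/Q) * z)"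
      using elim(3) by (simp add: symqD_def Q_def)
    also have "\<dots> = h1 + ((Q + 1/Q)*h2)*z + ((Q^2 + 1 + 1/Q^2)*h3)*z^2 + z^3 * R' z"
      unfolding elim(1) elim(2) R'_def by (rule symq_alg[OF Q0 QQ elim(3)])
    finally show ?case by (simp add: Q_def)
  qed
  ultimately show ?thesis unfolding ex2_def by blast
qed

lemma qnum_norm_ge:
  assumes q: "0 < q" "q < 1"
  shows "cmod (qnum q c) \<ge> (q powr (- Re c) - q powr Re c) / (1/q - q)"
proof -
  define Q where "Q = complex_of_real q"
  have n1: "cmod (Q powr c) = q powr Re c" unfolding Q_def using q by (subst norm_powr_real_powr) auto
  have n2: "cmod (Q powr (-c)) = q powr (- Re c)" unfolding Q_def using q by (subst norm_powr_real_powr) auto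
  have ineq: "q powr (- Re c) - q powr Re c \<le> cmod (Q powr c - Q powr (-c))"
    using norm_triangle_ineq3[of "Q powr (-c)" "Q powr c"] n1 n2 by (simp add: norm_minus_commute)
  have qq: "q * q < 1" using q mult_strict_mono[of q 1 q 1] by simp
  have pos: "1/q - q > 0" using q qq by (simp add: field_simps)
  moreover have d: "cmod (complex_of_real (q - 1/q)) = 1/q - q"
    by (simp only: norm_of_real) (use pos in simp)
  ultimately show ?thesis unfolding qnum_def Q_def[symmetric] norm_divide
    using ineq by (simp add: divide_right_mono)
qed

lemma qnum_ge1:
  assumes q: "0 < q" "q < 1" and c: "Re c \<ge> 1"
  shows "cmod (qnum q c) \<ge> 1"
proof -
  have qq: "q * q < 1" using q mult_strict_mono[of q 1 q 1] by simp
  have pos: "1/q - q > 0" using q qq by (simp add: field_simps)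
  have a: "q powr (-1) \<le> q powr (- Re c)" by (rule powr_mono') (use q c in auto)
  have b: "q powr Re c \<le> q" by (rule powr_le_one_le) (use q c in auto)
  have "1/q - q \<le> q powr (- Re c) - q powr Re c" using a b q by (simp add: powr_minus_divide)
  then have "1 \<le> (q powr (- Re c) - q powr Re c) / (1/q - q)" using pos by simp
  then show ?thesis using qnum_norm_ge[OF q, of c] by linarith
qed

lemma qnum_nz:
  assumes q: "0 < q" "q < 1" and c: "Re c > 0"
  shows "qnum q c \<noteq> 0"
proof -
  have qq: "q * q < 1" using q mult_strict_mono[of q 1 q 1] by simp
  have pos: "1/q - q > 0" using q qq by (simp add: field_simps)
  have "q powr Re c < q powr (- Re c)" by (rule powr_less_mono') (use q c in auto)
  then have "0 < (q powr (- Re c) - q powr Re c) / (1/q - q)" using pos by simp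
  then show ?thesis using qnum_norm_ge[OF q, of c] by auto
qed

lemma bernL_bound:
  assumes q: "0 < q" "q < 1" and eta: "Re \<eta> > -1" and n: "n \<ge> 2"
  shows "cmod (bern_L q \<eta> n) \<le> cmod (qnum q (1 + \<eta>))"
proof -
  have "Re (of_nat n + \<eta>) \<ge> 1" using n eta by simp
  then have "cmod (qnum q (of_nat n + \<eta>)) \<ge> 1" by (rule qnum_ge1[OF q])
  then show ?thesis unfolding bern_L_def norm_divide
    by (simp add: divide_le_eq mult_le_cancel_left1 order_trans[OF _ mult_left_mono])
qed

lemma taylor_summable:
  assumes hol: "f holomorphic_on ball 0 1" and z: "cmod z < 1"
  shows "summable (\<lambda>n. norm (taylor_coeff f n * z^n))"
proof -
  define w where "w = complex_of_real ((1 + cmod z) / 2)"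
  have nw: "cmod w = (1 + cmod z) / 2" unfolding w_def by (simp only: norm_of_real) simp
  have w: "w \<in> ball 0 1" "cmod z < cmod w" using z nw by auto
  have "(\<lambda>n. taylor_coeff f n * (w - 0)^n) sums f w"
    using holomorphic_power_series[OF hol w(1)] unfolding taylor_coeff_def .
  then have "summable (\<lambda>n. taylor_coeff f n * w^n)" by (simp add: sums_iff)
  then show ?thesis by (rule powser_insidea) (use w in simp)
qed

lemma bern_terms_summable:
  assumes q: "0 < q" "q < 1" and eta: "Re \<eta> > -1"
    and hol: "f holomorphic_on ball 0 1" and z: "cmod z < 1"
  shows "summable (\<lambda>n. norm (bern_L q \<eta> (n+2) * taylor_coeff f (n+2) * z^(n+2)))"
proof -
  define C where "C = cmod (qnum q (1 + \<eta>))"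
  have s: "summable (\<lambda>n. norm (taylor_coeff f (n+2) * z^(n+2)))"
    using summable_ignore_initial_segment[OF taylor_summable[OF hol z], of 2] .
  show ?thesis
  proof (rule summable_comparison_test[OF _ summable_mult[OF s, of C]])
    show "\<exists>N. \<forall>n\<ge>N. norm (norm (bern_L q \<eta> (n+2) * taylor_coeff f (n+2) * z^(n+2))) \<le> C * norm (taylor_coeff f (n+2) * z^(n+2))"
    proof (intro exI allI impI)
      fix n :: nat
      have "cmod (bern_L q \<eta> (n+2)) \<le> C" unfolding C_def by (rule bernL_bound[OF q eta]) simp
      then show "norm (norm (bern_L q \<eta> (n+2) * taylor_coeff f (n+2) * z^(n+2))) \<le> C * norm (taylor_coeff f (n+2) * z^(n+2))"
        by (simp add: norm_mult mult.assoc mult_right_mono)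
    qed
  qed
qed

lemma bern_ex3:
  assumes q: "0 < q" "q < 1" and eta: "Re \<eta> > -1" and hol: "f holomorphic_on ball 0 1"
  shows "ex3 (bernardi q \<eta> f) 0 1 (bern_L q \<eta> 2 * taylor_coeff f 2) (bern_L q \<eta> 3 * taylor_coeff f 3)"
proof -
  define c where "c n = bern_L q \<eta> n * taylor_coeff f n" for n
  have sumz: "summable (\<lambda>n. c (n+2) * z^(n+2))" if "cmod z < 1" for z
    using summable_norm_cancel[OF bern_terms_summable[OF q eta hol that]] by (simp add: c_def)
  have sum4: "summable (\<lambda>n. c (n+4) * z^n)" if "cmod z < 1" "z \<noteq> 0" for z
  proof -
    have e: "\<And>n::nat. n+2+2 = n+4" by simp
    have "summable (\<lambda>n. c ((n+2)+2) * z^((n+2)+2))"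
      using summable_ignore_initial_segment[OF sumz[OF that(1)], of 2] .
    then have "summable (\<lambda>n. c (n+4) * z^(n+4))" unfolding e .
    then have "summable (\<lambda>n. c (n+4) * z^(n+4) / z^4)" by (rule summable_divide)
    then show ?thesis using that(2) by (simp add: power_add)
  qed
  define R where "R z = (\<Sum>n. c (n+4) * z^n)" for z
  have cR: "isCont R 0" unfolding R_def
    by (rule isCont_powser[OF sum4[of "1/2"]]) auto
  have id: "bernardi q \<eta> f z = 0 + 1*z + c 2 * z^2 + c 3 * z^3 + z^4 * R z" if "cmod z < 1" "z \<noteq> 0" for z
  proof -
    have s: "summable (\<lambda>n. c (n+2) * z^(n+2))" by (rule sumz[OF that(1)])
    have "(\<Sum>n. c (n+2) * z^(n+2)) = (\<Sum>n. c ((n+2)+2) * z^((n+2)+2)) + (\<Sum>i<2. c (i+2) * z^(i+2))"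
      by (rule suminf_split_initial_segment[OF s])
    also have "(\<Sum>n. c ((n+2)+2) * z^((n+2)+2)) = (\<Sum>n. z^4 * (c (n+4) * z^n))"
      by (rule suminf_cong) (simp add: power_add mult_ac numeral_eq_Suc)
    also have "\<dots> = z^4 * R z" unfolding R_def by (rule suminf_mult[OF sum4[OF that]])
    finally have "(\<Sum>n. c (n+2) * z^(n+2)) = z^4 * R z + (c 2 * z^2 + c 3 * z^3)"
      by (simp add: numeral_eq_Suc lessThan_Suc)
    then show ?thesis unfolding bernardi_def c_def by (simp add: algebra_simps)
  qed
  have "\<forall>\<^sub>F z in at 0. bernardi q \<eta> f z = 0 + 1*z + c 2 * z^2 + c 3 * z^3 + z^4 * R z"
    unfolding eventually_at_filter eventually_nhds
    by (intro exI[of _ "ball 0 1"]) (auto simp: id)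
  moreover have "(R \<longlongrightarrow> R 0) (at 0)" using cR isCont_def by blast
  ultimately show ?thesis unfolding ex3_def c_def by auto
qed

lemma ex2_eqI: "ex2 f a0 a1 a2 \<Longrightarrow> a0 = b0 \<Longrightarrow> a1 = b1 \<Longrightarrow> a2 = b2 \<Longrightarrow> ex2 f b0 b1 b2" by simp
lemma ex3_eqI: "ex3 f a0 a1 a2 a3 \<Longrightarrow> a0 = b0 \<Longrightarrow> a1 = b1 \<Longrightarrow> a2 = b2 \<Longrightarrow> a3 = b3 \<Longrightarrow> ex3 f b0 b1 b2 b3" by simp

lemma ex2_ppow:
  assumes "ex2 f 1 x y"
  shows "ex2 (\<lambda>z. ppow (f z) a) 1 (of_real a * x) (of_real a * y + of_real a * (of_real a - 1) / 2 * x^2)"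
  using ex2_comp[OF assms tay2_ppow[of a]] by simp

lemma ex2_quot:
  assumes "ex2 P 1 x y" "ex2 Od 2 0 (2*w)"
  shows "ex2 (\<lambda>z. 2 * P z / Od z) 1 x (y - w)"
proof -
  have i: "ex2 (\<lambda>z. 1 / Od z) (1/2) 0 (- w / 2)"
    using ex2_comp[OF assms(2) tay2_inverse[of 2]] by (rule ex2_eqI) auto
  have "ex2 (\<lambda>z. (2 * P z) * (1 / Od z)) (2 * 1 * (1/2)) (2 * 1 * 0 + (2 * x + 0 * 1) * (1/2))
          (2 * 1 * (-w/2) + (2 * x + 0 * 1) * 0 + (2 * y + 0 * x + 0 * 1) * (1/2))"
    by (rule ex2_mult[OF ex2_mult[OF ex2_const assms(1)] i])
  moreover have "(\<lambda>z. (2 * P z) * (1 / Od z)) = (\<lambda>z. 2 * P z / Od z)" by (simp add: fun_eq_iff)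
  ultimately have "ex2 (\<lambda>z. 2 * P z / Od z) (2 * 1 * (1/2)) (2 * 1 * 0 + (2 * x + 0 * 1) * (1/2))
          (2 * 1 * (-w/2) + (2 * x + 0 * 1) * 0 + (2 * y + 0 * x + 0 * 1) * (1/2))" by simp
  then show ?thesis by (rule ex2_eqI) auto
qed

lemma class_ex2:
  fixes lam \<mu> :: real
  assumes q: "0 < q" "q < 1" and eta: "Re \<eta> > -1" and hol: "f holomorphic_on ball 0 1"
  defines "A2 \<equiv> bern_L q \<eta> 2 * taylor_coeff f 2" and "A3 \<equiv> bern_L q \<eta> 3 * taylor_coeff f 3"
    and "qa \<equiv> complex_of_real (q + 1/q)" and "qb \<equiv> complex_of_real (q^2 + 1 + 1/q^2)"
    and "lm \<equiv> complex_of_real lam" and "mu \<equiv> complex_of_real \<mu>"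
  shows "ex2 (class_expr q \<mu> lam (bernardi q \<eta> f)) 1
           (mu * (lm*qa*A2) + (1 - mu) * (lm*qa^2*A2))
           (mu * (lm*qb*A3 + lm*(lm-1)/2*qa^2*A2^2 - A3) + mu*(mu-1)/2 * (lm*qa*A2)^2
            + (1 - mu) * (lm*qb^2*A3 + lm*(lm-1)/2*qa^4*A2^2 - qb*A3) + (1-mu)*((1-mu)-1)/2 * (lm*qa^2*A2)^2
            + mu * (lm*qa*A2) * ((1-mu) * (lm*qa^2*A2)))"
proof -
  define F where "F = bernardi q \<eta> f"
  have q1: "q \<noteq> 1" using q by simp
  have hF: "ex3 F 0 1 A2 A3" unfolding F_def A2_def A3_def by (rule bern_ex3[OF q eta hol])
  have hD1: "ex2 (symqD q F) 1 (qa*A2) (qb*A3)"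
    using ex3_symqD[OF q(1) q1 hF] unfolding qa_def qb_def .
  have hP1: "ex2 (\<lambda>z. ppow (symqD q F z) lam) 1 (lm*qa*A2) (lm*qb*A3 + lm*(lm-1)/2*qa^2*A2^2)"
    using ex2_ppow[OF hD1, of lam] by (rule ex2_eqI) (simp_all add: lm_def algebra_simps power2_eq_square)
  define H where "H t = F t - F (-t)" for t
  have hH: "ex3 H 0 2 0 (2*A3)"
    using ex3_diff[OF hF ex3_reflect[OF hF]] unfolding H_def[symmetric] by (rule ex3_eqI) simp_all
  have hO: "ex2 (odd_quot F) 2 0 (2*A3)"
  proof (rule ex2_cong[OF ex3_div_z[OF hH]])
    show "\<forall>\<^sub>F z in at 0. H z / z = odd_quot F z"
      using ev_nz by eventually_elim (simp add: odd_quot_def H_def)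
  qed
  have hB1: "ex2 (\<lambda>z. 2 * ppow (symqD q F z) lam / odd_quot F z) 1 (lm*qa*A2) (lm*qb*A3 + lm*(lm-1)/2*qa^2*A2^2 - A3)"
    by (rule ex2_quot[OF hP1 hO])
  note hQ1 = ex2_ppow[OF hB1, of \<mu>]
  define G where "G t = t * symqD q F t" for t
  have hG: "ex3 G 0 1 (qa*A2) (qb*A3)" unfolding G_def by (rule ex2_mult_z[OF hD1])
  have hD2: "ex2 (symqD q G) 1 (qa*(qa*A2)) (qb*(qb*A3))"
    using ex3_symqD[OF q(1) q1 hG] unfolding qa_def qb_def .
  have hP2: "ex2 (\<lambda>z. ppow (symqD q G z) lam) 1 (lm*qa^2*A2) (lm*qb^2*A3 + lm*(lm-1)/2*qa^4*A2^2)"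
    using ex2_ppow[OF hD2, of lam] by (rule ex2_eqI) (simp_all add: lm_def algebra_simps power2_eq_square power4_eq_xxxx)
  have hD3: "ex2 (symqD q H) 2 0 (2*(qb*A3))"
    using ex3_symqD[OF q(1) q1 hH] unfolding qa_def qb_def by (rule ex2_eqI) simp_all
  have hB2: "ex2 (\<lambda>z. 2 * ppow (symqD q G z) lam / symqD q H z) 1 (lm*qa^2*A2) (lm*qb^2*A3 + lm*(lm-1)/2*qa^4*A2^2 - qb*A3)"
    by (rule ex2_quot[OF hP2 hD3])
  note hQ2 = ex2_ppow[OF hB2, of "1 - \<mu>"]
  note fin = ex2_mult[OF hQ1 hQ2]
  have e: "class_expr q \<mu> lam (bernardi q \<eta> f) = (\<lambda>z. ppow (2 * ppow (symqD q F z) lam / odd_quot F z) \<mu> * ppow (2 * ppow (symqD q G z) lam / symqD q H z) (1 - \<mu>))"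
    unfolding class_expr_def F_def G_def H_def by (rule ext) simp
  show ?thesis unfolding e using fin by (rule ex2_eqI) (simp_all add: mu_def)
qed

lemma coeff_alg1:
  fixes lm mu qa qb A2 A3 :: complex
  shows "mu * (lm*qa*A2) + (1 - mu) * (lm*qa^2*A2) = lm*qa*(mu - (mu-1)*qa)*A2"
  by (simp add: algebra_simps power2_eq_square)

lemma coeff_alg2:
  fixes lm mu qa qb A2 A3 :: complex
  shows "mu * (lm*qb*A3 + lm*(lm-1)/2*qa^2*A2^2 - A3) + mu*(mu-1)/2 * (lm*qa*A2)^2
            + (1 - mu) * (lm*qb^2*A3 + lm*(lm-1)/2*qa^4*A2^2 - qb*A3) + (1-mu)*((1-mu)-1)/2 * (lm*qa^2*A2)^2
            + mu * (lm*qa*A2) * ((1-mu) * (lm*qa^2*A2))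
       = (lm*qb - 1)*(mu - (mu-1)*qb)*A3 + lm*qa^2/2*(lm*(mu - (mu-1)*qa)^2 - (mu - (mu-1)*qa^2))*A2^2"
proof -
  have "2 * (mu * (lm*qb*A3 + lm*(lm-1)/2*qa^2*A2^2 - A3) + mu*(mu-1)/2 * (lm*qa*A2)^2
            + (1 - mu) * (lm*qb^2*A3 + lm*(lm-1)/2*qa^4*A2^2 - qb*A3) + (1-mu)*((1-mu)-1)/2 * (lm*qa^2*A2)^2
            + mu * (lm*qa*A2) * ((1-mu) * (lm*qa^2*A2)))
       = 2 * ((lm*qb - 1)*(mu - (mu-1)*qb)*A3 + lm*qa^2/2*(lm*(mu - (mu-1)*qa)^2 - (mu - (mu-1)*qa^2))*A2^2)"
    by (simp add: distrib_left right_diff_distrib) algebra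
  then show ?thesis by (subst (asm) mult_left_cancel) simp_all
qed

lemma moebius_ineq:
  fixes a w :: complex assumes "cmod a < 1" "cmod w < 1"
  shows "cmod (w - a) < cmod (1 - cnj a * w)"
proof -
  have id: "(cmod (1 - cnj a * w))^2 - (cmod (w - a))^2 = (1 - (cmod a)^2) * (1 - (cmod w)^2)"
    unfolding cmod_power2 by (simp add: algebra_simps power2_eq_square)
  have "(1 - (cmod a)^2) * (1 - (cmod w)^2) > 0"
    using assms by (intro mult_pos_pos) (simp_all add: abs_square_less_1)
  then have "(cmod (w - a))^2 < (cmod (1 - cnj a * w))^2" using id by simp
  then show ?thesis by (rule power2_less_imp_less) simp
qed

lemma holo_ex2:
  assumes hol: "h holomorphic_on ball 0 1"
  shows "ex2 h (h 0) (taylor_coeff h 1) (taylor_coeff h 2)"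
proof -
  have "ex2 h (h 0) (deriv h 0) (deriv (deriv h) 0 / 2)"
    by (rule tay2_ex2[OF holo_tay2[OF hol zero_less_one]])
  then show ?thesis by (simp add: taylor_coeff_def numeral_eq_Suc)
qed

lemma linear_ex2:
  assumes "\<forall>z. cmod z < 1 \<longrightarrow> h z = \<alpha> * z"
  shows "ex2 h 0 \<alpha> 0"
proof -
  have "\<forall>\<^sub>F z in at 0. h z = 0 + \<alpha> * z + 0 * z^2 + z^3 * 0"
    unfolding eventually_at_filter eventually_nhds
    using assms by (intro exI[of _ "ball 0 1"]) auto
  then show ?thesis unfolding ex2_def by (intro exI[of _ "\<lambda>_. 0"] exI[of _ 0]) auto
qed

lemma schwarz_coeffs:
  assumes hol: "h holomorphic_on ball 0 1" and h0: "h 0 = 0" and hb: "\<forall>z\<in>ball 0 1. cmod (h z) < 1"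
  shows "cmod (taylor_coeff h 1) \<le> 1 \<and> cmod (taylor_coeff h 2) \<le> 1 - (cmod (taylor_coeff h 1))^2"
proof -
  define c1 where "c1 = taylor_coeff h 1"
  define c2 where "c2 = taylor_coeff h 2"
  have hex: "ex2 h 0 c1 c2" using holo_ex2[OF hol] h0 by (simp add: c1_def c2_def)
  have dh: "deriv h 0 = c1" by (simp add: c1_def taylor_coeff_def)
  have no: "\<And>z. norm z < 1 \<Longrightarrow> norm (h z) < 1" using hb by simp
  note S = Schwarz_Lemma[OF hol h0 no]
  have c1le: "cmod c1 \<le> 1" using S(2)[of 0] dh by simp
  have lin: "c1 = \<alpha> \<and> c2 = 0" if "\<forall>z. cmod z < 1 \<longrightarrow> h z = \<alpha> * z" for \<alpha>
    using ex2_unique[OF hex linear_ex2[OF that]] by simp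
  show ?thesis
  proof (cases "cmod c1 = 1")
    case True
    then obtain \<alpha> where "\<forall>z. cmod z < 1 \<longrightarrow> h z = \<alpha> * z" using S(3)[of 0] dh by auto
    then have "c2 = 0" using lin by blast
    then show ?thesis using True unfolding c1_def[symmetric] c2_def[symmetric] by simp
  next
    case False
    then have c1lt: "cmod c1 < 1" using c1le by simp
    have strict: "cmod (h z) < cmod z" if "cmod z < 1" "z \<noteq> 0" for z
    proof -
      have "cmod (h z) \<le> cmod z" by (rule Schwarz_Lemma(1)[OF hol h0 no that(1)])
      moreover have "cmod (h z) \<noteq> cmod z"
      proof
        assume eq: "cmod (h z) = cmod z"
        have "\<exists>\<alpha>. (\<forall>z. cmod z < 1 \<longrightarrow> h z = \<alpha> * z) \<and> cmod \<alpha> = 1"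
          using S(3)[of 0] that eq by auto
        then obtain \<alpha> where a: "\<forall>z. cmod z < 1 \<longrightarrow> h z = \<alpha> * z" "cmod \<alpha> = 1" by blast
        then show False using lin[OF a(1)] False by simp
      qed
      ultimately show ?thesis by simp
    qed
    define k where "k z = (if z = 0 then deriv h 0 else (h z - h 0) / (z - 0))" for z
    have kh: "k holomorphic_on ball 0 1" unfolding k_def
      by (rule pole_lemma[OF hol]) simp
    have k0: "k 0 = c1" by (simp add: k_def dh)
    have kb: "cmod (k z) < 1" if "z \<in> ball 0 1" for z
    proof (cases "z = 0")
      case True then show ?thesis using c1lt k0 by simp
    next
      case False
      then have "cmod (h z) < cmod z" using strict that by simp
      then show ?thesis using False by (simp add: k_def h0 norm_divide divide_less_eq)
    qed
    have den: "1 - cnj c1 * k z \<noteq> 0" if "z \<in> ball 0 1" for z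
    proof
      assume "1 - cnj c1 * k z = 0"
      then have "cnj c1 * k z = 1" by simp
      then have "cmod c1 * cmod (k z) = 1" by (metis complex_mod_cnj norm_mult norm_one)
      moreover have "cmod c1 * cmod (k z) < 1 * 1"
        using c1lt kb[OF that] by (intro mult_strict_mono') auto
      ultimately show False by simp
    qed
    define m where "m z = (k z - c1) / (1 - cnj c1 * k z)" for z
    have mh: "m holomorphic_on ball 0 1" unfolding m_def
      by (intro holomorphic_intros kh) (use den in auto)
    have m0: "m 0 = 0" by (simp add: m_def k0)
    have mb: "norm (m z) < 1" if "norm z < 1" for z
    proof -
      have z: "z \<in> ball 0 1" using that by simp
      have "cmod (k z - c1) < cmod (1 - cnj c1 * k z)" by (rule moebius_ineq[OF c1lt kb[OF z]])
      then show ?thesis using den[OF z] by (simp add: m_def norm_divide divide_less_eq)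
    qed
    have dm1: "norm (deriv m 0) \<le> 1" using Schwarz_Lemma[OF mh m0 mb, of 0] by simp
    obtain R c where R: "(R \<longlongrightarrow> c) (at 0)" and ev: "\<forall>\<^sub>F z in at 0. h z = 0 + c1*z + c2*z^2 + z^3 * R z"
      using hex unfolding ex2_def by blast
    have "((\<lambda>y. (k y - k 0) / (y - 0)) \<longlongrightarrow> c2 + 0 * c) (at 0)"
    proof -
      have "((\<lambda>y. c2 + y * R y) \<longlongrightarrow> c2 + 0 * c) (at 0)" by (intro tendsto_intros R)
      moreover have "\<forall>\<^sub>F y in at 0. c2 + y * R y = (k y - k 0) / (y - 0)"
        using ev ev_nz by eventually_elim (simp add: k_def h0 dh field_simps power_numeral_reduce)
      ultimately show ?thesis by (rule Lim_transform_eventually)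
    qed
    then have dk: "(k has_field_derivative c2) (at 0)" by (simp add: has_field_derivative_iff)
    have dk1: "((\<lambda>x. k x - c1) has_field_derivative c2) (at 0)" using DERIV_diff[OF dk DERIV_const[of c1]] by simp
    have g0: "1 - cnj c1 * k 0 \<noteq> 0" using den[of 0] by simp
    have "(m has_field_derivative (c2 * (1 - cnj c1 * k 0) - (k 0 - c1) * (0 - cnj c1 * c2)) / ((1 - cnj c1 * k 0) * (1 - cnj c1 * k 0))) (at 0)"
      unfolding m_def[abs_def]
      by (intro DERIV_divide dk1 DERIV_diff DERIV_const DERIV_cmult dk g0)
    then have "deriv m 0 = (c2 * (1 - cnj c1 * c1) - (c1 - c1) * (0 - cnj c1 * c2)) / ((1 - cnj c1 * c1) * (1 - cnj c1 * c1))"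
      using k0 by (simp only: DERIV_imp_deriv)
    also have "\<dots> = c2 / (1 - cnj c1 * c1)" using g0 k0 by simp
    finally have "deriv m 0 = c2 / (1 - cnj c1 * c1)" .
    moreover have "cnj c1 * c1 = of_real ((cmod c1)^2)" using complex_norm_square[of c1] by (simp only: mult.commute)
    ultimately have "deriv m 0 = c2 / of_real (1 - (cmod c1)^2)" by simp
    moreover have pos: "1 - (cmod c1)^2 > 0" using c1lt by (simp add: abs_square_less_1)
    moreover have nn: "cmod (complex_of_real (1 - (cmod c1)^2)) = 1 - (cmod c1)^2"
      by (simp only: norm_of_real abs_of_pos[OF pos])
    ultimately have "cmod c2 / (1 - (cmod c1)^2) \<le> 1" using dm1 by (simp only: norm_divide)
    then have "cmod c2 \<le> 1 - (cmod c1)^2" using pos by (simp add: divide_le_eq)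
    then show ?thesis using c1le by (simp add: c1_def c2_def)
  qed
qed

lemma tc_simps: "taylor_coeff f 0 = f 0" "taylor_coeff f 1 = deriv f 0" "taylor_coeff f (Suc 0) = deriv f 0"
  "taylor_coeff f 2 = deriv (deriv f) 0 / 2"
  by (simp_all add: taylor_coeff_def numeral_eq_Suc)

lemma subord_eqs:
  assumes sub: "subord P \<phi>" and hphi: "\<phi> holomorphic_on ball 0 1" and hP: "ex2 P 1 X1 X2"
  shows "\<exists>c1 c2. cmod c1 \<le> 1 \<and> cmod c2 \<le> 1 - (cmod c1)^2 \<and>
            X1 = taylor_coeff \<phi> 1 * c1 \<and> X2 = taylor_coeff \<phi> 1 * c2 + taylor_coeff \<phi> 2 * c1^2"
proof -
  obtain h where hol: "h holomorphic_on ball 0 1" and h0: "h 0 = 0" and hb: "\<forall>z\<in>ball 0 1. norm (h z) < 1"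
    and eq: "\<forall>z\<in>ball 0 1. P z = \<phi> (h z)"
    using sub unfolding subord_def by blast
  define c1 where "c1 = taylor_coeff h 1"
  define c2 where "c2 = taylor_coeff h 2"
  have hex: "ex2 h 0 c1 c2" using holo_ex2[OF hol] h0 by (simp add: c1_def c2_def)
  have tphi: "tay2 \<phi> 0 (\<phi> 0) (taylor_coeff \<phi> 1) (taylor_coeff \<phi> 2)"
    using holo_tay2[OF hphi zero_less_one] by (simp add: tc_simps)
  have "ex2 (\<lambda>z. \<phi> (h z)) (\<phi> 0) (taylor_coeff \<phi> 1 * c1) (taylor_coeff \<phi> 1 * c2 + taylor_coeff \<phi> 2 * c1^2)"
    by (rule ex2_comp[OF hex tphi])
  moreover have "\<forall>\<^sub>F z in at 0. \<phi> (h z) = P z"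
    unfolding eventually_at_filter eventually_nhds
    using eq by (intro exI[of _ "ball 0 1"]) auto
  ultimately have "ex2 P (\<phi> 0) (taylor_coeff \<phi> 1 * c1) (taylor_coeff \<phi> 1 * c2 + taylor_coeff \<phi> 2 * c1^2)"
    by (rule ex2_cong)
  from ex2_unique[OF hP this] have "X1 = taylor_coeff \<phi> 1 * c1 \<and> X2 = taylor_coeff \<phi> 1 * c2 + taylor_coeff \<phi> 2 * c1^2"
    by simp
  moreover have "cmod c1 \<le> 1 \<and> cmod c2 \<le> 1 - (cmod c1)^2"
    using schwarz_coeffs[OF hol h0 hb] by (simp add: c1_def c2_def)
  ultimately show ?thesis by blast
qed

lemma inverse_coeffs:
  assumes hf: "f holomorphic_on ball 0 1" and f0: "f 0 = 0" and df: "deriv f 0 = 1" and ie: "inv_ext f g"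
  shows "taylor_coeff g 2 = - taylor_coeff f 2 \<and> taylor_coeff g 3 = 2 * (taylor_coeff f 2)^2 - taylor_coeff f 3"
proof -
  have hg: "g holomorphic_on ball 0 1" and gf: "\<forall>z\<in>ball 0 1. f z \<in> ball 0 1 \<longrightarrow> g (f z) = z"
    using ie unfolding inv_ext_def by auto
  have tf: "tay3 f 0 (taylor_coeff f 0) (taylor_coeff f 1) (taylor_coeff f 2) (taylor_coeff f 3)"
    using holo_tay3[OF hf zero_less_one] unfolding taylor_coeff_def .
  have ef: "ex3 f 0 1 (taylor_coeff f 2) (taylor_coeff f 3)"
    using tay3_ex3[OF tf] f0 df by (simp add: tc_simps)
  have tg: "tay3 g 0 (taylor_coeff g 0) (taylor_coeff g 1) (taylor_coeff g 2) (taylor_coeff g 3)"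
    using holo_tay3[OF hg zero_less_one] unfolding taylor_coeff_def .
  note c = ex3_comp0[OF ef tg]
  have cont: "isCont f 0"
    using holomorphic_on_imp_continuous_on[OF hf] by (simp add: continuous_on_eq_continuous_at)
  then have fl: "(f \<longlongrightarrow> 0) (at 0)" using f0 by (metis isCont_def)
  have "\<forall>\<^sub>F z in at 0. f z \<in> ball 0 1"
    using fl by (rule topological_tendstoD) auto
  moreover have "\<forall>\<^sub>F z in at (0::complex). z \<in> ball 0 1"
    unfolding eventually_at_filter eventually_nhds by (intro exI[of _ "ball 0 1"]) auto
  ultimately have "\<forall>\<^sub>F z in at 0. z = g (f z)"
    by eventually_elim (use gf in auto)
  then have "ex3 (\<lambda>z. g (f z)) 0 1 0 0" by (rule ex3_cong[OF ex3_id])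
  from ex3_unique[OF c this] have
    b1: "taylor_coeff g 1 = 1" and b2: "taylor_coeff g 1 * taylor_coeff f 2 + taylor_coeff g 2 * 1^2 = 0"
    and b3: "taylor_coeff g 1 * taylor_coeff f 3 + 2 * taylor_coeff g 2 * 1 * taylor_coeff f 2 + taylor_coeff g 3 * 1^3 = 0"
    by auto
  have g2: "taylor_coeff g 2 = - taylor_coeff f 2" using b2 b1 by (simp add: eq_neg_iff_add_eq_0 add.commute)
  have "taylor_coeff g 3 = - taylor_coeff f 3 - 2 * taylor_coeff g 2 * taylor_coeff f 2"
    using b3 b1 by (simp add: algebra_simps eq_neg_iff_add_eq_0)
  then show ?thesis using g2 by (simp add: power2_eq_square)
qed

lemma final_bounds:
  fixes \<alpha> \<beta> K E1 E2 a2 a3 c1 c2 d1 d2 :: complex and e1 :: real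
  assumes E1: "E1 = of_real e1" and e1: "e1 > 0" and \<alpha>: "\<alpha> \<noteq> 0" and \<beta>: "\<beta> \<noteq> 0"
    and \<Omega>: "2*\<beta> + 2*K \<noteq> 0" and \<Theta>: "E1^2 * (2*\<beta> + 2*K) + 2*(E1 - E2)*\<alpha>^2 \<noteq> 0"
    and c1: "cmod c1 \<le> 1" and c2: "cmod c2 \<le> 1 - (cmod c1)^2"
    and d1: "cmod d1 \<le> 1" and d2: "cmod d2 \<le> 1 - (cmod d1)^2"
    and e1q: "\<alpha> * a2 = E1 * c1" and e2q: "- \<alpha> * a2 = E1 * d1"
    and e3q: "\<beta> * a3 + K * a2^2 = E1 * c2 + E2 * c1^2"
    and e4q: "\<beta> * (2*a2^2 - a3) + K * a2^2 = E1 * d2 + E2 * d1^2"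
  shows "cmod a2 \<le> e1 / cmod \<alpha>"
    and "cmod a2 \<le> sqrt (2 * (cmod (E2 - E1) + e1) / cmod (2*\<beta> + 2*K))"
    and "cmod a2 \<le> e1 * sqrt (2 * e1) / sqrt (cmod (E1^2 * (2*\<beta> + 2*K) + 2*(E1 - E2)*\<alpha>^2))"
    and "cmod a3 \<le> e1 / cmod \<beta> + min (e1^2 / (cmod \<alpha>)^2) (2 * (cmod (E2 - E1) + e1) / cmod (2*\<beta> + 2*K))"
proof -
  define \<Omega>' where "\<Omega>' = 2*\<beta> + 2*K"
  define \<Theta>' where "\<Theta>' = E1^2 * (2*\<beta> + 2*K) + 2*(E1 - E2)*\<alpha>^2"
  have E1nz: "E1 \<noteq> 0" using E1 e1 by simp
  have nE1: "cmod E1 = e1" using E1 e1 by simp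
  have "E1 * d1 = - (\<alpha> * a2)" using e2q by simp
  also have "\<dots> = E1 * (- c1)" using e1q by simp
  finally have "E1 * d1 = E1 * (- c1)" .
  then have dd1: "d1 = - c1" using E1nz mult_left_cancel[OF E1nz, of d1 "- c1"] by blast
  have sq: "d1^2 = c1^2" using dd1 by simp
  have nd1: "cmod d1 = cmod c1" using dd1 by simp
  have "cmod \<alpha> * cmod a2 = e1 * cmod c1" using arg_cong[OF e1q, of cmod] nE1 by (simp add: norm_mult)
  also have "\<dots> \<le> e1" using c1 e1 by (simp add: mult_le_cancel_left1)
  finally have a2A: "cmod \<alpha> * cmod a2 \<le> e1" .
  then show b1: "cmod a2 \<le> e1 / cmod \<alpha>" using \<alpha> by (simp add: field_simps)
  have a2sqA: "(cmod a2)^2 \<le> e1^2 / (cmod \<alpha>)^2"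
  proof -
    have "(cmod \<alpha> * cmod a2)^2 \<le> e1^2" using a2A by (intro power_mono) auto
    then show ?thesis using \<alpha> by (simp add: field_simps power_mult_distrib)
  qed
  have sumq: "\<Omega>' * a2^2 = E1 * (c2 + d2) + 2 * E2 * c1^2"
    using arg_cong2[OF e3q e4q, of "(+)"] sq unfolding \<Omega>'_def by (simp add: algebra_simps)
  have nE2: "cmod E2 \<le> cmod (E2 - E1) + e1" using norm_triangle_ineq[of "E2 - E1" E1] nE1 by simp
  have c1sq: "(cmod c1)^2 \<le> 1" using c1 by (simp add: power_le_one)
  have "cmod \<Omega>' * (cmod a2)^2 = cmod (E1 * (c2 + d2) + 2 * E2 * c1^2)"
    using arg_cong[OF sumq, of cmod] by (simp add: norm_mult norm_power)
  also have "\<dots> \<le> e1 * (cmod c2 + cmod d2) + 2 * cmod E2 * (cmod c1)^2"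
  proof -
    have "cmod (E1 * (c2 + d2) + 2 * E2 * c1^2) \<le> cmod (E1 * (c2 + d2)) + cmod (2 * E2 * c1^2)"
      by (rule norm_triangle_ineq)
    also have "cmod (E1 * (c2 + d2)) \<le> e1 * (cmod c2 + cmod d2)"
      using nE1 e1 norm_triangle_ineq[of c2 d2] by (simp add: norm_mult mult_left_mono)
    finally show ?thesis by (simp add: norm_mult norm_power)
  qed
  also have "\<dots> \<le> e1 * (2 - 2 * (cmod c1)^2) + 2 * (cmod (E2 - E1) + e1) * (cmod c1)^2"
  proof -
    have "cmod c2 + cmod d2 \<le> 2 - 2 * (cmod c1)^2" using c2 d2 nd1 by simp
    then have "e1 * (cmod c2 + cmod d2) \<le> e1 * (2 - 2 * (cmod c1)^2)" using e1 by (simp add: mult_left_mono)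
    moreover have "2 * cmod E2 * (cmod c1)^2 \<le> 2 * (cmod (E2 - E1) + e1) * (cmod c1)^2"
      using nE2 by (simp add: mult_right_mono)
    ultimately show ?thesis by linarith
  qed
  also have "\<dots> = 2 * e1 + 2 * cmod (E2 - E1) * (cmod c1)^2" by (simp add: algebra_simps)
  also have "\<dots> \<le> 2 * (cmod (E2 - E1) + e1)"
    using c1sq mult_left_mono[OF c1sq, of "cmod (E2 - E1)"] by simp
  finally have om: "cmod \<Omega>' * (cmod a2)^2 \<le> 2 * (cmod (E2 - E1) + e1)" .
  have \<Omega>nz: "cmod \<Omega>' > 0" using \<Omega> unfolding \<Omega>'_def by simp
  have a2sqO: "(cmod a2)^2 \<le> 2 * (cmod (E2 - E1) + e1) / cmod \<Omega>'"
    using om \<Omega>nz by (simp add: field_simps)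
  then have "sqrt ((cmod a2)^2) \<le> sqrt (2 * (cmod (E2 - E1) + e1) / cmod \<Omega>')" by (rule real_sqrt_le_mono)
  then show "cmod a2 \<le> sqrt (2 * (cmod (E2 - E1) + e1) / cmod (2*\<beta> + 2*K))" unfolding \<Omega>'_def by simp
  have thq: "\<Theta>' * a2^2 = E1^3 * (c2 + d2 + 2 * c1^2)"
  proof -
    have "\<Theta>' * a2^2 = E1^2 * (\<Omega>' * a2^2) + 2*(E1 - E2) * (\<alpha> * a2)^2"
      unfolding \<Theta>'_def \<Omega>'_def by (simp add: algebra_simps power2_eq_square)
    also have "\<dots> = E1^3 * (c2 + d2 + 2 * c1^2)" unfolding sumq e1q
      by (simp add: algebra_simps power2_eq_square power3_eq_cube)
    finally show ?thesis .
  qed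
  have "cmod \<Theta>' * (cmod a2)^2 = e1^3 * cmod (c2 + d2 + 2 * c1^2)"
    using arg_cong[OF thq, of cmod] nE1 by (simp add: norm_mult norm_power)
  also have "\<dots> \<le> e1^3 * 2"
  proof -
    have "cmod (c2 + d2 + 2 * c1^2) \<le> cmod c2 + cmod d2 + 2 * (cmod c1)^2"
      using norm_triangle_ineq[of "c2 + d2" "2 * c1^2"] norm_triangle_ineq[of c2 d2]
      by (simp add: norm_mult norm_power)
    also have "\<dots> \<le> 2" using c2 d2 nd1 by simp
    finally show ?thesis using e1 by (simp add: mult_left_mono)
  qed
  finally have th: "cmod \<Theta>' * (cmod a2)^2 \<le> 2 * e1^3" by simp
  have \<Theta>nz: "cmod \<Theta>' > 0" using \<Theta> unfolding \<Theta>'_def by simp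
  have "(cmod a2)^2 \<le> 2 * e1^3 / cmod \<Theta>'" using th \<Theta>nz by (simp add: field_simps)
  then have "sqrt ((cmod a2)^2) \<le> sqrt (2 * e1^3 / cmod \<Theta>')" by (rule real_sqrt_le_mono)
  also have "sqrt (2 * e1^3 / cmod \<Theta>') = e1 * sqrt (2 * e1) / sqrt (cmod \<Theta>')"
  proof -
    have "2 * e1^3 = e1^2 * (2 * e1)" by (simp add: power2_eq_square power3_eq_cube)
    then show ?thesis using e1 by (simp add: real_sqrt_divide real_sqrt_mult)
  qed
  finally show "cmod a2 \<le> e1 * sqrt (2 * e1) / sqrt (cmod (E1^2 * (2*\<beta> + 2*K) + 2*(E1 - E2)*\<alpha>^2))"
    unfolding \<Theta>'_def by simp
  have diffq: "2 * \<beta> * (a3 - a2^2) = E1 * (c2 - d2)"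
    using arg_cong2[OF e3q e4q, of "(-)"] sq by (simp add: algebra_simps)
  have "cmod (2 * \<beta>) * cmod (a3 - a2^2) = e1 * cmod (c2 - d2)"
    using arg_cong[OF diffq, of cmod] nE1 by (simp add: norm_mult)
  also have "\<dots> \<le> e1 * 2"
  proof -
    have "cmod (c2 - d2) \<le> cmod c2 + cmod d2" by (rule norm_triangle_ineq4)
    also have "\<dots> \<le> 2" using c2 d2[unfolded nd1] c1sq zero_le_power2[of "cmod c1"] by linarith
    finally show ?thesis using e1 by (simp add: mult_left_mono)
  qed
  finally have "2 * cmod \<beta> * cmod (a3 - a2^2) \<le> 2 * e1" by (simp add: norm_mult)
  then have d3: "cmod (a3 - a2^2) \<le> e1 / cmod \<beta>" using \<beta> by (simp add: field_simps)
  have "cmod a3 \<le> cmod (a3 - a2^2) + cmod (a2^2)" using norm_triangle_ineq[of "a3 - a2^2" "a2^2"] by simp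
  also have "\<dots> \<le> e1 / cmod \<beta> + (cmod a2)^2" using d3 by (simp add: norm_power)
  also have "\<dots> \<le> e1 / cmod \<beta> + min (e1^2 / (cmod \<alpha>)^2) (2 * (cmod (E2 - E1) + e1) / cmod \<Omega>')"
    using a2sqA a2sqO by simp
  finally show "cmod a3 \<le> e1 / cmod \<beta> + min (e1^2 / (cmod \<alpha>)^2) (2 * (cmod (E2 - E1) + e1) / cmod (2*\<beta> + 2*K))"
    unfolding \<Omega>'_def .
qed

theorem theorem2:
  fixes q \<mu> lam :: real and \<eta> :: complex and \<phi> f :: "complex \<Rightarrow> complex"
    and E L :: "nat \<Rightarrow> complex" and M :: "nat \<Rightarrow> real" and N e1 :: real and \<Omega> \<Theta> :: complex
  defines "E \<equiv> taylor_coeff \<phi>"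
    and "L \<equiv> bern_L q \<eta>"
    and "M \<equiv> (\<lambda>k. \<mu> - (\<mu> - 1) * qnat q k)"
    and "N \<equiv> \<mu> - (\<mu> - 1) * (qnat q 2)\<^sup>2"
    and "e1 \<equiv> Re (E 1)"
    and "\<Omega> \<equiv> complex_of_real (2 * (lam * qnat q 3 - 1) * M 3) * L 3
             + complex_of_real (lam * (lam * (M 2)\<^sup>2 - N) * (qnat q 2)\<^sup>2) * (L 2)\<^sup>2"
    and "\<Theta> \<equiv> complex_of_real (2 * (lam * qnat q 3 - 1) * M 3) * (E 1)\<^sup>2 * L 3
             + complex_of_real lam * (complex_of_real (lam * (M 2)\<^sup>2) * ((E 1)\<^sup>2 + 2 * E 1 - 2 * E 2)
                 - complex_of_real N * (E 1)\<^sup>2) * complex_of_real ((qnat q 2)\<^sup>2) * (L 2)\<^sup>2"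
  assumes "0 < q" and "q < 1" and "Re \<eta> > -1" and "\<mu> \<ge> 0" and "lam \<ge> 1"
    and "\<phi> holomorphic_on ball 0 1"
    and "\<forall>z\<in>ball 0 1. Re (\<phi> z) > 0"
    and "\<phi> 0 = 1"
    and "Im (E 1) = 0" and "Re (E 1) > 0"
    and "M 2 \<noteq> 0" and "M 3 \<noteq> 0" and "\<Omega> \<noteq> 0" and "\<Theta> \<noteq> 0"
    and "S_class q \<eta> \<mu> lam \<phi> f"
  shows "cmod (taylor_coeff f 2) \<le>
           min (e1 / (lam * \<bar>M 2\<bar> * cmod (L 2) * qnat q 2))
             (min (sqrt (2 * (cmod (E 2 - E 1) + e1) / cmod \<Omega>))
                  (e1 * sqrt (2 * e1) / sqrt (cmod \<Theta>)))
         \<and> cmod (taylor_coeff f 3) \<le>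
           e1 / ((lam * qnat q 3 - 1) * \<bar>M 3\<bar> * cmod (L 3))
           + min (e1\<^sup>2 / (lam\<^sup>2 * (M 2)\<^sup>2 * (qnat q 2)\<^sup>2 * (cmod (L 2))\<^sup>2))
                 (2 * (cmod (E 2 - E 1) + e1) / cmod \<Omega>)"
proof -
  have q1: "q \<noteq> 1" using \<open>q < 1\<close> by simp
  have eta: "Re \<eta> > -1" using \<open>Re \<eta> > -1\<close> .
  note qq = \<open>0 < q\<close> \<open>q < 1\<close>
  note hphi = \<open>\<phi> holomorphic_on ball 0 1\<close>
  have q2: "qnat q 2 = q + 1/q" by (rule qnat_2[OF qq(1) q1])
  have q3: "qnat q 3 = q^2 + 1 + 1/q^2" by (rule qnat_3[OF qq(1) q1])
  have S: "Sigma_class f" and subf: "subord (class_expr q \<mu> lam (bernardi q \<eta> f)) \<phi>"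
    and subg: "\<forall>g. inv_ext f g \<longrightarrow> subord (class_expr q \<mu> lam (bernardi q \<eta> g)) \<phi>"
    using \<open>S_class q \<eta> \<mu> lam \<phi> f\<close> unfolding S_class_def by auto
  have hf: "f holomorphic_on ball 0 1" and f0: "f 0 = 0" and df: "deriv f 0 = 1"
    using S unfolding Sigma_class_def by auto
  obtain g where ie: "inv_ext f g" using S unfolding Sigma_class_def by auto
  have hg: "g holomorphic_on ball 0 1" using ie unfolding inv_ext_def by auto
  have subg': "subord (class_expr q \<mu> lam (bernardi q \<eta> g)) \<phi>" using subg ie by blast
  define a2 where "a2 = taylor_coeff f 2"
  define a3 where "a3 = taylor_coeff f 3"
  have ig: "taylor_coeff g 2 = - a2" "taylor_coeff g 3 = 2 * a2^2 - a3"
    using inverse_coeffs[OF hf f0 df ie] by (simp_all add: a2_def a3_def)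
  define qa where "qa = complex_of_real (q + 1/q)"
  define qb where "qb = complex_of_real (q^2 + 1 + 1/q^2)"
  define lm where "lm = complex_of_real lam"
  define mu where "mu = complex_of_real \<mu>"
  define \<alpha> where "\<alpha> = complex_of_real (lam * qnat q 2 * M 2) * L 2"
  define \<beta> where "\<beta> = complex_of_real ((lam * qnat q 3 - 1) * M 3) * L 3"
  define K where "K = complex_of_real (lam * (lam * (M 2)\<^sup>2 - N) * (qnat q 2)\<^sup>2 / 2) * (L 2)^2"
  have M2c: "complex_of_real (M 2) = mu - (mu - 1) * qa" unfolding M_def mu_def qa_def q2 by simp
  have M3c: "complex_of_real (M 3) = mu - (mu - 1) * qb" unfolding M_def mu_def qb_def q3 by simp
  have Nc: "complex_of_real N = mu - (mu - 1) * qa^2" unfolding N_def mu_def qa_def q2 by simp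
  have q2c: "complex_of_real (qnat q 2) = qa" by (simp add: qa_def q2)
  have q3c: "complex_of_real (qnat q 3) = qb" by (simp add: qb_def q3)
  have lmc: "complex_of_real lam = lm" by (simp add: lm_def)
  have \<alpha>': "\<alpha> = lm*qa*(mu - (mu-1)*qa) * L 2"
    unfolding \<alpha>_def of_real_mult q2c M2c lmc by (simp add: mult_ac)
  have \<beta>': "\<beta> = (lm*qb - 1)*(mu - (mu-1)*qb) * L 3"
    unfolding \<beta>_def of_real_mult of_real_diff of_real_1 q3c M3c lmc by (simp add: mult_ac)
  have K': "K = lm*qa^2/2*(lm*(mu - (mu-1)*qa)^2 - (mu - (mu-1)*qa^2)) * (L 2)^2"
    unfolding K_def of_real_mult of_real_diff of_real_divide of_real_power of_real_numeral q2c M2c lmc Nc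
    by (simp add: field_simps)
  note cf = class_ex2[OF qq eta hf, where lam=lam and \<mu>=\<mu>]
  note cg = class_ex2[OF qq eta hg, where lam=lam and \<mu>=\<mu>]
  obtain c1 c2 where c1: "cmod c1 \<le> 1" and c2: "cmod c2 \<le> 1 - (cmod c1)^2"
    and xf: "mu * (lm*qa*(L 2 * a2)) + (1 - mu) * (lm*qa^2*(L 2 * a2)) = E 1 * c1"
    and yf: "mu * (lm*qb*(L 3 * a3) + lm*(lm-1)/2*qa^2*(L 2 * a2)^2 - (L 3 * a3)) + mu*(mu-1)/2 * (lm*qa*(L 2 * a2))^2
            + (1 - mu) * (lm*qb^2*(L 3 * a3) + lm*(lm-1)/2*qa^4*(L 2 * a2)^2 - qb*(L 3 * a3)) + (1-mu)*((1-mu)-1)/2 * (lm*qa^2*(L 2 * a2))^2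
            + mu * (lm*qa*(L 2 * a2)) * ((1-mu) * (lm*qa^2*(L 2 * a2))) = E 1 * c2 + E 2 * c1^2"
    using subord_eqs[OF subf hphi cf]
    unfolding E_def L_def a2_def a3_def qa_def qb_def lm_def mu_def by blast
  obtain d1 d2 where d1: "cmod d1 \<le> 1" and d2: "cmod d2 \<le> 1 - (cmod d1)^2"
    and xg: "mu * (lm*qa*(L 2 * (- a2))) + (1 - mu) * (lm*qa^2*(L 2 * (- a2))) = E 1 * d1"
    and yg: "mu * (lm*qb*(L 3 * (2 * a2^2 - a3)) + lm*(lm-1)/2*qa^2*(L 2 * (- a2))^2 - (L 3 * (2 * a2^2 - a3))) + mu*(mu-1)/2 * (lm*qa*(L 2 * (- a2)))^2
            + (1 - mu) * (lm*qb^2*(L 3 * (2 * a2^2 - a3)) + lm*(lm-1)/2*qa^4*(L 2 * (- a2))^2 - qb*(L 3 * (2 * a2^2 - a3))) + (1-mu)*((1-mu)-1)/2 * (lm*qa^2*(L 2 * (- a2)))^2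
            + mu * (lm*qa*(L 2 * (- a2))) * ((1-mu) * (lm*qa^2*(L 2 * (- a2)))) = E 1 * d2 + E 2 * d1^2"
    using subord_eqs[OF subg' hphi cg] ig
    unfolding E_def L_def a2_def a3_def qa_def qb_def lm_def mu_def by auto
  have e1q: "\<alpha> * a2 = E 1 * c1" using xf unfolding coeff_alg1 \<alpha>' by (simp add: mult_ac)
  have e2q: "- \<alpha> * a2 = E 1 * d1" using xg unfolding coeff_alg1 \<alpha>' by (simp add: mult_ac)
  have e3q: "\<beta> * a3 + K * a2^2 = E 1 * c2 + E 2 * c1^2" using yf unfolding coeff_alg2 \<beta>' K'
    by (simp add: mult_ac power_mult_distrib)
  have e4q: "\<beta> * (2*a2^2 - a3) + K * a2^2 = E 1 * d2 + E 2 * d1^2" using yg unfolding coeff_alg2 \<beta>' K'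
    by (simp add: mult_ac power_mult_distrib)
  have E1: "E 1 = complex_of_real e1" using \<open>Im (E 1) = 0\<close> by (simp add: e1_def complex_eq_iff)
  have e1p: "e1 > 0" using \<open>Re (E 1) > 0\<close> by (simp add: e1_def)
  have Lnz: "L n \<noteq> 0" if "n \<ge> 2" for n
  proof -
    have "qnum q (1 + \<eta>) \<noteq> 0" by (rule qnum_nz[OF qq]) (use eta in simp)
    moreover have "qnum q (of_nat n + \<eta>) \<noteq> 0" by (rule qnum_nz[OF qq]) (use eta that in simp)
    ultimately show ?thesis by (simp add: L_def bern_L_def)
  qed
  have lp: "lam > 0" using \<open>lam \<ge> 1\<close> by simp
  have q2p: "qnat q 2 > 0" using q2 qq by (simp add: add_pos_pos)
  have q3g: "qnat q 3 > 1" using q3 qq by (simp add: add_pos_pos)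
  have l3: "lam * qnat q 3 - 1 > 0"
  proof -
    have "1 * qnat q 3 \<le> lam * qnat q 3" using \<open>lam \<ge> 1\<close> q3g by (intro mult_right_mono) auto
    then show ?thesis using q3g by linarith
  qed
  have L2: "L 2 \<noteq> 0" and L3: "L 3 \<noteq> 0" using Lnz by auto
  have r2: "complex_of_real (lam * qnat q 2 * M 2) \<noteq> 0"
    using lp q2p \<open>M 2 \<noteq> 0\<close> by (simp only: of_real_eq_0_iff) simp
  have r3: "complex_of_real ((lam * qnat q 3 - 1) * M 3) \<noteq> 0"
    using l3 \<open>M 3 \<noteq> 0\<close> by (simp only: of_real_eq_0_iff) simp
  have \<alpha>nz: "\<alpha> \<noteq> 0" unfolding \<alpha>_def by (rule no_zero_divisors[OF r2 L2])
  have \<beta>nz: "\<beta> \<noteq> 0" unfolding \<beta>_def by (rule no_zero_divisors[OF r3 L3])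
  have \<Omega>eq: "\<Omega> = 2*\<beta> + 2*K" unfolding \<Omega>_def \<beta>_def K_def by (simp add: field_simps)
  have \<Theta>eq: "\<Theta> = (E 1)^2 * (2*\<beta> + 2*K) + 2*(E 1 - E 2)*\<alpha>^2"
    unfolding \<Theta>_def \<beta>_def K_def \<alpha>_def by (simp add: field_simps power2_eq_square)
  have \<Omega>nz: "2*\<beta> + 2*K \<noteq> 0" using \<open>\<Omega> \<noteq> 0\<close> \<Omega>eq by simp
  have \<Theta>nz: "(E 1)^2 * (2*\<beta> + 2*K) + 2*(E 1 - E 2)*\<alpha>^2 \<noteq> 0" using \<open>\<Theta> \<noteq> 0\<close> \<Theta>eq by simp
  note fb = final_bounds[OF E1 e1p \<alpha>nz \<beta>nz \<Omega>nz \<Theta>nz c1 c2 d1 d2 e1q e2q e3q e4q]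
  have n\<alpha>: "cmod \<alpha> = lam * \<bar>M 2\<bar> * cmod (L 2) * qnat q 2"
    unfolding \<alpha>_def norm_mult norm_of_real using lp q2p by (simp add: abs_mult)
  have n\<beta>: "cmod \<beta> = (lam * qnat q 3 - 1) * \<bar>M 3\<bar> * cmod (L 3)"
    unfolding \<beta>_def norm_mult norm_of_real using l3 by (simp add: abs_mult)
  have n\<alpha>2: "(cmod \<alpha>)^2 = lam\<^sup>2 * (M 2)\<^sup>2 * (qnat q 2)\<^sup>2 * (cmod (L 2))\<^sup>2"
    unfolding n\<alpha> by (simp add: power_mult_distrib)
  have A1: "cmod a2 \<le> e1 / (lam * \<bar>M 2\<bar> * cmod (L 2) * qnat q 2)" using fb(1) unfolding n\<alpha> .
  have A2: "cmod a2 \<le> sqrt (2 * (cmod (E 2 - E 1) + e1) / cmod \<Omega>)" using fb(2) unfolding \<Omega>eq[symmetric] .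
  have A3: "cmod a2 \<le> e1 * sqrt (2 * e1) / sqrt (cmod \<Theta>)" using fb(3) unfolding \<Theta>eq[symmetric] .
  have B: "cmod a3 \<le> e1 / ((lam * qnat q 3 - 1) * \<bar>M 3\<bar> * cmod (L 3))
           + min (e1\<^sup>2 / (lam\<^sup>2 * (M 2)\<^sup>2 * (qnat q 2)\<^sup>2 * (cmod (L 2))\<^sup>2))
                 (2 * (cmod (E 2 - E 1) + e1) / cmod \<Omega>)"
    using fb(4) unfolding n\<alpha>2 n\<beta> \<Omega>eq[symmetric] .
  show ?thesis using A1 A2 A3 B unfolding a2_def a3_def by simp
qed

end
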